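(* Let $\{\mathcal{C}_1,\dots,\mathcal{C}_9\}$ be a complete set of maximal commuting classes of three-qubit Pauli operators ($d=8$). Then there exists exactly one maximal commuting class $\mathcal{S}\subseteq\mathcal{C}_1\cup\dots\cup\mathcal{C}_5$ distinct from $\mathcal{C}_1,\dots,\mathcal{C}_5$. Moreover, $\{\mathcal{C}_6,\mathcal{C}_7,\mathcal{C}_8,\mathcal{C}_9,\mathcal{S}\}$ is an unextendible set of five Pauli classes, and their common eigenbases form a weakly unextendible set of five mutually unbiased bases in $\mathbb{C}^8$.
   Context: Three-qubit Pauli operators are the tensor products $P_1\otimes P_2\otimes P_3$ with $P_k\in\{I,X,Y,Z\}$; products are taken up to a phase. A maximal commuting class in $d=8$ is a set of $7$ mutually commuting non-identity three-qubit Pauli operators. A complete set of classes is a family of $9$ pairwise disjoint maximal commuting classes whose union is the set of all $63$ non-identity three-qubit Pauli operators. A set of pairwise disjoint maximal commuting classes $\{\mathcal{C}_1,\dots,\mathcal{C}_L\}$ is unextendible if no further maximal commuting class can be formed from the non-identity Pauli operators not in their union. Two orthonormal bases of $\mathbb{C}^d$ are mutually unbiased if $|\langle a|b\rangle|=1/\sqrt d$ for all vectors $a$ of the first and $b$ of the second; common eigenbases of pairwise disjoint maximal commuting Pauli classes are mutually unbiased. A set of such bases is weakly unextendible if there is no further basis, unbiased to all of them, that is the common eigenbasis of a maximal commuting class of Pauli operators. *)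

theory Defs
  imports "Jordan_Normal_Form.Matrix" "Jordan_Normal_Form.Char_Poly" Complex_Main
begin

datatype pauli1 = PI | PX | PY | PZ

type_synonym pauli3 = "pauli1 \<times> pauli1 \<times> pauli1"

fun pauli1_entry :: "pauli1 \<Rightarrow> nat \<Rightarrow> nat \<Rightarrow> complex" where
  "pauli1_entry PI i j = (if i = j then 1 else 0)"
| "pauli1_entry PX i j = (if i \<noteq> j then 1 else 0)"
| "pauli1_entry PY i j = (if i = 0 \<and> j = 1 then - \<i> else if i = 1 \<and> j = 0 then \<i> else 0)"
| "pauli1_entry PZ i j = (if i = j then (if i = 0 then 1 else -1) else 0)"

text \<open>Tensor product P1 (x) P2 (x) P3 as an 8 x 8 complex matrix; row/column index
  i in 0..7 has binary digits (i div 4, (i div 2) mod 2, i mod 2), the first qubit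
  being the most significant.\<close>
definition pauli_mat :: "pauli3 \<Rightarrow> complex mat" where
  "pauli_mat P = (case P of (P1, P2, P3) \<Rightarrow>
     mat 8 8 (\<lambda>(i, j). pauli1_entry P1 (i div 4) (j div 4)
                     * pauli1_entry P2 ((i div 2) mod 2) ((j div 2) mod 2)
                     * pauli1_entry P3 (i mod 2) (j mod 2)))"

definition nonid_paulis :: "pauli3 set" where
  "nonid_paulis = {P. P \<noteq> (PI, PI, PI)}"

definition commute :: "pauli3 \<Rightarrow> pauli3 \<Rightarrow> bool" where
  "commute P Q \<longleftrightarrow> pauli_mat P * pauli_mat Q = pauli_mat Q * pauli_mat P"

definition max_comm_class :: "pauli3 set \<Rightarrow> bool" where
  "max_comm_class S \<longleftrightarrow> S \<subseteq> nonid_paulis \<and> card S = 7 \<and>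
     (\<forall>P\<in>S. \<forall>Q\<in>S. commute P Q)"

definition unextendible_classes :: "pauli3 set set \<Rightarrow> bool" where
  "unextendible_classes F \<longleftrightarrow> (\<forall>C\<in>F. max_comm_class C) \<and>
     (\<forall>C\<in>F. \<forall>D\<in>F. C \<noteq> D \<longrightarrow> C \<inter> D = {}) \<and>
     \<not> (\<exists>D. max_comm_class D \<and> D \<subseteq> nonid_paulis - \<Union>F)"

definition onb8 :: "complex vec set \<Rightarrow> bool" where
  "onb8 B \<longleftrightarrow> card B = 8 \<and> B \<subseteq> carrier_vec 8 \<and>
     (\<forall>a\<in>B. \<forall>b\<in>B. a \<bullet>c b = (if a = b then 1 else 0))"

definition common_eigenbasis :: "pauli3 set \<Rightarrow> complex vec set \<Rightarrow> bool" where
  "common_eigenbasis S B \<longleftrightarrow> onb8 B \<and>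
     (\<forall>v\<in>B. \<forall>P\<in>S. \<exists>k. eigenvector (pauli_mat P) v k)"

definition mutually_unbiased :: "complex vec set \<Rightarrow> complex vec set \<Rightarrow> bool" where
  "mutually_unbiased B1 B2 \<longleftrightarrow> (\<forall>a\<in>B1. \<forall>b\<in>B2. cmod (a \<bullet>c b) = 1 / sqrt 8)"

definition weakly_unextendible_MUBs :: "complex vec set set \<Rightarrow> bool" where
  "weakly_unextendible_MUBs Bs \<longleftrightarrow> (\<forall>B\<in>Bs. onb8 B) \<and>
     (\<forall>B1\<in>Bs. \<forall>B2\<in>Bs. B1 \<noteq> B2 \<longrightarrow> mutually_unbiased B1 B2) \<and>
     \<not> (\<exists>D B. max_comm_class D \<and> common_eigenbasis D B \<and>
              (\<forall>B'\<in>Bs. mutually_unbiased B B'))"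

end

theory Submission
  imports Defs "HOL-Library.Product_Plus" "Jordan_Normal_Form.Determinant"
begin


fun xb :: "pauli1 \<Rightarrow> bool" where
  "xb PI = False" | "xb PX = True" | "xb PY = True" | "xb PZ = False"
fun zb :: "pauli1 \<Rightarrow> bool" where
  "zb PI = False" | "zb PX = False" | "zb PY = True" | "zb PZ = True"

definition pk :: "bool \<Rightarrow> bool \<Rightarrow> pauli1" where
  "pk a b = (if a then (if b then PY else PX) else (if b then PZ else PI))"

lemma xb_pk[simp]: "xb (pk a b) = a" and zb_pk[simp]: "zb (pk a b) = b"
  by (auto simp: pk_def)

lemma pk_xz[simp]: "pk (xb p) (zb p) = p"
  by (cases p) (auto simp: pk_def)

lemma pauli1_eqI: "xb p = xb q \<Longrightarrow> zb p = zb q \<Longrightarrow> p = q"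
  by (cases p; cases q; simp)

instantiation pauli1 :: ab_group_add
begin
definition "zero_pauli1 = PI"
definition "plus_pauli1 p q = pk (xb p \<noteq> xb q) (zb p \<noteq> zb q)"
definition "uminus_pauli1 (p::pauli1) = p"
definition "minus_pauli1 p q = pk (xb p \<noteq> xb q) (zb p \<noteq> zb q)"
instance
  by standard (rule pauli1_eqI; simp add: zero_pauli1_def plus_pauli1_def uminus_pauli1_def minus_pauli1_def; blast)+
end

lemma xb_add[simp]: "xb (p + q) = (xb p \<noteq> xb q)" and zb_add[simp]: "zb (p + q) = (zb p \<noteq> zb q)"
  by (simp_all add: plus_pauli1_def)
lemma xb0[simp]: "xb 0 = False" and zb0[simp]: "zb 0 = False"
  by (simp_all add: zero_pauli1_def)
lemma pauli1_add_self[simp]: "(p::pauli1) + p = 0"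
  by (rule pauli1_eqI) simp_all
lemma pauli1_uminus[simp]: "- (p::pauli1) = p"
  by (simp add: uminus_pauli1_def)
lemma pauli3_add_self[simp]: "(p::pauli3) + p = 0"
  by (cases p) (simp add: zero_prod_def)
lemma pauli3_uminus[simp]: "- (p::pauli3) = p"
  by (cases p) simp
lemma pauli3_minus: "(p::pauli3) - q = p + q"
  by (metis diff_conv_add_uminus pauli3_uminus)

lemma PI0: "PI = 0" by (simp add: zero_pauli1_def)

lemma UNIV_pauli1: "(UNIV::pauli1 set) = {PI,PX,PY,PZ}" by (auto intro: pauli1.exhaust)
instance pauli1 :: finite
  by standard (simp add: UNIV_pauli1)

lemma card_pauli1: "card (UNIV::pauli1 set) = 4" by (simp add: UNIV_pauli1)
lemma card_pauli3: "card (UNIV::pauli3 set) = 64"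
  by (simp add: card_pauli1 flip: UNIV_Times_UNIV)


fun ph1 :: "pauli1 \<Rightarrow> pauli1 \<Rightarrow> complex" where
  "ph1 PX PY = \<i>" | "ph1 PY PZ = \<i>" | "ph1 PZ PX = \<i>"
| "ph1 PY PX = - \<i>" | "ph1 PZ PY = - \<i>" | "ph1 PX PZ = - \<i>"
| "ph1 _ _ = 1"

lemma less2: "(i::nat) < 2 \<Longrightarrow> i = 0 \<or> i = 1" by auto

lemma pe_mult: "i < 2 \<Longrightarrow> j < 2 \<Longrightarrow>
   (\<Sum>k<2. pauli1_entry a i k * pauli1_entry b k j) = ph1 a b * pauli1_entry (a + b) i j"
  apply (drule less2, drule less2)
  apply (cases a; cases b; auto simp: numeral_2_eq_2 plus_pauli1_def pk_def zero_pauli1_def)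
  done

lemma sum8: "(\<Sum>k<8. f k) = f 0 + f 1 + f 2 + f 3 + f 4 + f 5 + f 6 + (f (7::nat)::complex)"
  by (simp add: eval_nat_numeral)
lemma sum2: "(\<Sum>k<2. f k) = f 0 + (f (1::nat)::complex)"
  by (simp add: eval_nat_numeral)

definition ph :: "pauli3 \<Rightarrow> pauli3 \<Rightarrow> complex" where
  "ph P Q = (case P of (a1,a2,a3) \<Rightarrow> case Q of (b1,b2,b3) \<Rightarrow> ph1 a1 b1 * ph1 a2 b2 * ph1 a3 b3)"

lemma pauli_mat_dim[simp]: "pauli_mat P \<in> carrier_mat 8 8"
  "dim_row (pauli_mat P) = 8" "dim_col (pauli_mat P) = 8"
  by (auto simp: pauli_mat_def split: prod.splits)

lemma pauli_mat_index: "i < 8 \<Longrightarrow> j < 8 \<Longrightarrow> pauli_mat (a1,a2,a3) $$ (i,j) =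
   pauli1_entry a1 (i div 4) (j div 4) * pauli1_entry a2 ((i div 2) mod 2) ((j div 2) mod 2)
                     * pauli1_entry a3 (i mod 2) (j mod 2)"
  by (simp add: pauli_mat_def)

lemma triple_sum: fixes A1 A2 A3 B1 B2 B3 :: "nat \<Rightarrow> complex" shows
  "(\<Sum>k<8. (A1 (k div 4) * A2 ((k div 2) mod 2) * A3 (k mod 2)) * (B1 (k div 4) * B2 ((k div 2) mod 2) * B3 (k mod 2)))
   = (\<Sum>k<2. A1 k * B1 k) * (\<Sum>k<2. A2 k * B2 k) * (\<Sum>k<2. A3 k * B3 k)"
  unfolding sum8 sum2 by (simp add: algebra_simps)

lemma pauli_mult: "pauli_mat P * pauli_mat Q = ph P Q \<cdot>\<^sub>m pauli_mat (P + Q)"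
proof -
  obtain a1 a2 a3 where P: "P = (a1,a2,a3)" by (cases P) auto
  obtain b1 b2 b3 where Q: "Q = (b1,b2,b3)" by (cases Q) auto
  show ?thesis
  proof (rule eq_matI)
    fix i j assume i: "i < dim_row (ph P Q \<cdot>\<^sub>m pauli_mat (P + Q))" and j: "j < dim_col (ph P Q \<cdot>\<^sub>m pauli_mat (P + Q))"
    then have i8: "i < 8" and j8: "j < 8" by auto
    have "(pauli_mat P * pauli_mat Q) $$ (i,j) = (\<Sum>k<8. pauli_mat P $$ (i,k) * pauli_mat Q $$ (k,j))"
      using i8 j8 by (simp add: scalar_prod_def lessThan_atLeast0)
    also have "\<dots> = (\<Sum>k<8. (pauli1_entry a1 (i div 4) (k div 4) * pauli1_entry a2 ((i div 2) mod 2) ((k div 2) mod 2)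
                     * pauli1_entry a3 (i mod 2) (k mod 2)) * (pauli1_entry b1 (k div 4) (j div 4) * pauli1_entry b2 ((k div 2) mod 2) ((j div 2) mod 2)
                     * pauli1_entry b3 (k mod 2) (j mod 2)))"
      using i8 j8 by (intro sum.cong) (simp_all add: P Q pauli_mat_index)
    also have "\<dots> = (\<Sum>k<2. pauli1_entry a1 (i div 4) k * pauli1_entry b1 k (j div 4))
       * (\<Sum>k<2. pauli1_entry a2 ((i div 2) mod 2) k * pauli1_entry b2 k ((j div 2) mod 2))
       * (\<Sum>k<2. pauli1_entry a3 (i mod 2) k * pauli1_entry b3 k (j mod 2))"
      by (rule triple_sum)
    also have "\<dots> = (ph1 a1 b1 * pauli1_entry (a1+b1) (i div 4) (j div 4))
       * (ph1 a2 b2 * pauli1_entry (a2+b2) ((i div 2) mod 2) ((j div 2) mod 2))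
       * (ph1 a3 b3 * pauli1_entry (a3+b3) (i mod 2) (j mod 2))"
      using i8 j8 by (simp add: pe_mult)
    also have "\<dots> = (ph P Q \<cdot>\<^sub>m pauli_mat (P + Q)) $$ (i,j)"
      using i8 j8 by (simp add: P Q ph_def pauli_mat_index)
    finally show "(pauli_mat P * pauli_mat Q) $$ (i,j) = (ph P Q \<cdot>\<^sub>m pauli_mat (P + Q)) $$ (i,j)" .
  qed auto
qed


definition om1 :: "pauli1 \<Rightarrow> pauli1 \<Rightarrow> bool" where
  "om1 a b = ((xb a \<and> zb b) \<noteq> (xb b \<and> zb a))"

definition xdz :: "pauli3 \<Rightarrow> pauli3 \<Rightarrow> bool" where
  "xdz P Q = (case P of (a1,a2,a3) \<Rightarrow> case Q of (b1,b2,b3) \<Rightarrow>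
      ((xb a1 \<and> zb b1) \<noteq> ((xb a2 \<and> zb b2) \<noteq> (xb a3 \<and> zb b3))))"

definition om :: "pauli3 \<Rightarrow> pauli3 \<Rightarrow> bool" where
  "om P Q = (xdz P Q \<noteq> xdz Q P)"

lemma om_split: "om (a1,a2,a3) (b1,b2,b3) = (om1 a1 b1 \<noteq> (om1 a2 b2 \<noteq> om1 a3 b3))"
  unfolding om_def xdz_def om1_def by auto

lemma om_sym: "om P Q = om Q P"
  unfolding om_def by auto

lemma om_self[simp]: "\<not> om P P"
  unfolding om_def by auto

lemma ph1_swap: "ph1 b a = (if om1 a b then -1 else 1) * ph1 a b"
  by (cases a; cases b; simp add: om1_def)

lemma ph1_nz: "ph1 a b \<noteq> 0"
  by (cases a; cases b; simp)

lemma ph_swap: "ph Q P = (if om P Q then -1 else 1) * ph P Q"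
proof -
  obtain a1 a2 a3 where P: "P = (a1,a2,a3)" by (cases P) auto
  obtain b1 b2 b3 where Q: "Q = (b1,b2,b3)" by (cases Q) auto
  have "ph Q P = ((if om1 a1 b1 then -1 else 1) * ph1 a1 b1) * ((if om1 a2 b2 then -1 else 1) * ph1 a2 b2)
     * ((if om1 a3 b3 then -1 else 1) * ph1 a3 b3)"
    unfolding P Q ph_def prod.case ph1_swap[where a=a1 and b=b1] ph1_swap[where a=a2 and b=b2] ph1_swap[where a=a3 and b=b3] by simp
  then show ?thesis unfolding P Q ph_def om_split
    by (cases "om1 a1 b1"; cases "om1 a2 b2"; cases "om1 a3 b3"; simp)
qed

lemma ph_nz: "ph P Q \<noteq> 0"
  by (cases P; cases Q; simp add: ph_def ph1_nz)

lemma ph_self: "ph P P = 1"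
proof -
  have "ph1 a a = 1" for a by (cases a) simp_all
  then show ?thesis by (cases P) (simp add: ph_def)
qed

lemma less8: "(i::nat) < 8 \<Longrightarrow> i = 0 \<or> i = 1 \<or> i = 2 \<or> i = 3 \<or> i = 4 \<or> i = 5 \<or> i = 6 \<or> i = 7"
  by auto

lemma pauli_mat_zero: "pauli_mat 0 = 1\<^sub>m 8"
proof (rule eq_matI)
  fix i j assume "i < dim_row (1\<^sub>m 8)" "j < dim_col (1\<^sub>m 8 :: complex mat)"
  then have i: "i < 8" and j: "j < 8" by auto
  show "pauli_mat 0 $$ (i, j) = 1\<^sub>m 8 $$ (i, j)"
    using less8[OF i] less8[OF j] i j
    by (auto simp: zero_prod_def zero_pauli1_def pauli_mat_index)
qed auto

lemma one_smult_mat': "(1::complex) \<cdot>\<^sub>m A = A"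
  by (rule eq_matI) auto
lemma smult_smult_mat': "(c::complex) \<cdot>\<^sub>m (d \<cdot>\<^sub>m A) = (c * d) \<cdot>\<^sub>m A"
  by (rule eq_matI) auto

lemma pauli_sq: "pauli_mat P * pauli_mat P = 1\<^sub>m 8"
  by (simp add: pauli_mult ph_self pauli_mat_zero one_smult_mat')

lemma smult_pauli_cancel: assumes "c \<cdot>\<^sub>m pauli_mat P = d \<cdot>\<^sub>m pauli_mat P" shows "c = d"
proof -
  have "(c \<cdot>\<^sub>m pauli_mat P) * pauli_mat P = (d \<cdot>\<^sub>m pauli_mat P) * pauli_mat P" using assms by simp
  then have "c \<cdot>\<^sub>m 1\<^sub>m 8 = d \<cdot>\<^sub>m (1\<^sub>m 8 :: complex mat)"
    by (simp add: mult_smult_assoc_mat[of _ 8 8 _ 8] pauli_sq)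
  then have "(c \<cdot>\<^sub>m 1\<^sub>m 8) $$ (0,0) = (d \<cdot>\<^sub>m (1\<^sub>m 8 :: complex mat)) $$ (0,0)" by simp
  then show ?thesis by simp
qed

lemma commute_iff: "commute P Q \<longleftrightarrow> \<not> om P Q"
proof -
  have "commute P Q \<longleftrightarrow> ph P Q \<cdot>\<^sub>m pauli_mat (P + Q) = ph Q P \<cdot>\<^sub>m pauli_mat (P + Q)"
    unfolding commute_def pauli_mult by (simp add: add.commute)
  also have "\<dots> \<longleftrightarrow> ph P Q = ph Q P"
    using smult_pauli_cancel[of _ "P+Q"] by auto
  also have "\<dots> \<longleftrightarrow> \<not> om P Q"
    using ph_nz[of P Q] by (auto simp: ph_swap[of P Q] om_sym[of Q P])
  finally show ?thesis .
qed

lemma swap_mat: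
  shows "pauli_mat Q * pauli_mat P = (if om P Q then -1 else 1) \<cdot>\<^sub>m (pauli_mat P * pauli_mat Q)"
  using om_sym[of P Q] by (simp add: pauli_mult ph_swap[of P Q] add.commute smult_smult_mat')

lemma commute_mat: assumes "\<not> om P Q"
  shows "pauli_mat Q * pauli_mat P = pauli_mat P * pauli_mat Q"
  using assms commute_iff commute_def by metis


lemma om1_add: "om1 (a + b) c = (om1 a c \<noteq> om1 b c)"
  by (cases a; cases b; cases c; simp add: om1_def plus_pauli1_def pk_def)

lemma om_add_left: "om (P + Q) R = (om P R \<noteq> om Q R)"
  by (cases P; cases Q; cases R) (auto simp: om_split om1_add)

lemma om_add_right: "om R (P + Q) = (om R P \<noteq> om R Q)"
  by (metis om_sym om_add_left)

lemma zero3: "(0::pauli3) = (PI,PI,PI)"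
  by (simp add: zero_prod_def zero_pauli1_def)

lemma om_zero_left[simp]: "\<not> om 0 P" and om_zero_right[simp]: "\<not> om P 0"
  by (cases P; simp add: zero3 om_split om1_def)+

lemma add_cancel3: "(P::pauli3) + Q + Q = P"
  by (simp add: add.assoc)

lemma add_eq_zero3: "(P::pauli3) + Q = 0 \<longleftrightarrow> P = Q"
proof
  assume "P + Q = 0"
  then have "P + Q + Q = Q" by simp
  then show "P = Q" by (simp add: add_cancel3)
qed simp

definition perp :: "pauli3 set \<Rightarrow> pauli3 set" where
  "perp A = {x. \<forall>a\<in>A. \<not> om x a}"

definition subgrp :: "pauli3 set \<Rightarrow> bool" where
  "subgrp H \<longleftrightarrow> 0 \<in> H \<and> (\<forall>x\<in>H. \<forall>y\<in>H. x + y \<in> H)"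

lemma perp_subgrp: "subgrp (perp A)"
  unfolding subgrp_def perp_def by (auto simp: om_add_left)

lemma perp_anti: "A \<subseteq> B \<Longrightarrow> perp B \<subseteq> perp A"
  unfolding perp_def by auto

lemma perp_perp: "A \<subseteq> perp (perp A)"
  unfolding perp_def using om_sym by blast

lemma exists_anti: assumes "h \<noteq> 0" shows "\<exists>v. om v h"
proof -
  obtain a1 a2 a3 where h: "h = (a1,a2,a3)" by (cases h) auto
  define q where "q a = (if a = PX then PZ else PX)" for a
  have q: "a \<noteq> PI \<Longrightarrow> om1 (q a) a" for a by (cases a) (auto simp: q_def om1_def)
  have qI: "om1 PI a = False" for a by (simp add: om1_def)
  show ?thesis
  proof (cases "a1 = PI")
    case False
    then show ?thesis using q[OF False] by (intro exI[of _ "(q a1, PI, PI)"]) (simp add: h om_split qI)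
  next
    case a1: True
    show ?thesis
    proof (cases "a2 = PI")
      case False
      then show ?thesis using q[OF False] by (intro exI[of _ "(PI, q a2, PI)"]) (simp add: h om_split qI)
    next
      case True
      then have "a3 \<noteq> PI" using a1 assms h zero3 by auto
      then show ?thesis using q by (intro exI[of _ "(PI, PI, q a3)"]) (simp add: h om_split qI)
    qed
  qed
qed

definition chi :: "bool \<Rightarrow> int" where "chi b = (if b then -1 else 1)"

lemma sum_shift: "(\<Sum>v\<in>UNIV. f (v + c)) = (\<Sum>v\<in>(UNIV::pauli3 set). (f v :: int))"
proof -
  have "bij (\<lambda>v::pauli3. v + c)"
    by (rule bij_betwI[where g="\<lambda>v. v + c"]) (auto simp: add_cancel3)
  then show ?thesis using sum.reindex_bij_betw by blast
qed

lemma inner_v: "(\<Sum>v\<in>UNIV. chi (om v h)) = (if h = 0 then 64 else 0)"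
proof (cases "h = 0")
  case True
  then show ?thesis by (simp add: chi_def card_pauli3)
next
  case False
  then obtain c where c: "om c h" using exists_anti by blast
  have "(\<Sum>v\<in>UNIV. chi (om v h)) = (\<Sum>v\<in>UNIV. chi (om (v + c) h))"
    by (rule sum_shift[symmetric])
  also have "\<dots> = (\<Sum>v\<in>UNIV. - chi (om v h))"
    using c by (intro sum.cong) (auto simp: om_add_left chi_def)
  also have "\<dots> = - (\<Sum>v\<in>UNIV. chi (om v h))"
    by (simp add: sum_negf)
  finally show ?thesis using False by simp
qed

lemma inner_h: assumes H: "subgrp H"
  shows "(\<Sum>h\<in>H. chi (om v h)) = (if v \<in> perp H then int (card H) else 0)"
proof (cases "v \<in> perp H")
  case True
  then show ?thesis by (simp add: perp_def chi_def)
next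
  case False
  then obtain c where c: "c \<in> H" "om v c" unfolding perp_def by auto
  have bij: "bij_betw (\<lambda>h. h + c) H H"
    by (rule bij_betwI[where g="\<lambda>h. h + c"]) (use H c in \<open>auto simp: subgrp_def add_cancel3\<close>)
  have "(\<Sum>h\<in>H. chi (om v h)) = (\<Sum>h\<in>H. chi (om v (h + c)))"
    using sum.reindex_bij_betw[OF bij, of "\<lambda>h. chi (om v h)"] by simp
  also have "\<dots> = (\<Sum>h\<in>H. - chi (om v h))"
    using c by (intro sum.cong) (auto simp: om_add_right chi_def)
  also have "\<dots> = - (\<Sum>h\<in>H. chi (om v h))"
    by (simp add: sum_negf)
  finally show ?thesis using False by simp
qed

lemma card_perp: assumes H: "subgrp H" shows "card H * card (perp H) = 64"
proof -
  have "(\<Sum>v\<in>UNIV. \<Sum>h\<in>H. chi (om v h)) = (\<Sum>h\<in>H. \<Sum>v\<in>UNIV. chi (om v h))"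
    by (rule sum.swap)
  also have "\<dots> = (\<Sum>h\<in>H. if h = 0 then 64 else 0)" by (simp add: inner_v)
  also have "\<dots> = 64" using H by (simp add: subgrp_def)
  finally have 1: "(\<Sum>v\<in>UNIV. \<Sum>h\<in>H. chi (om v h)) = 64" .
  have "(\<Sum>v\<in>UNIV. \<Sum>h\<in>H. chi (om v h)) = (\<Sum>v\<in>UNIV. if v \<in> perp H then int (card H) else 0)"
    using inner_h[OF H] by simp
  also have "\<dots> = int (card H) * int (card (perp H))"
    by (simp add: sum.If_cases)
  finally show ?thesis using 1 by (metis of_nat_eq_iff of_nat_mult of_nat_numeral)
qed

lemma nonid_eq: "nonid_paulis = {P. P \<noteq> 0}"
  by (simp add: nonid_paulis_def zero3)

lemma mcc_perp: assumes "max_comm_class S"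
  shows "perp S = insert 0 S" "0 \<notin> S" "finite S" "card S = 7"
proof -
  have S: "S \<subseteq> nonid_paulis" "card S = 7" "\<forall>P\<in>S. \<forall>Q\<in>S. \<not> om P Q"
    using assms by (auto simp: max_comm_class_def commute_iff)
  show z: "0 \<notin> S" using S(1) by (auto simp: nonid_eq)
  show fin: "finite S" using S(2) card.infinite by fastforce
  show "card S = 7" by (rule S(2))
  have c8: "card (insert 0 S) = 8" using z fin S(2) by simp
  have sub1: "insert 0 S \<subseteq> perp S" using S(3) by (auto simp: perp_def)
  have sub2: "insert 0 S \<subseteq> perp (perp S)"
  proof -
    have "S \<subseteq> perp (perp S)" by (rule perp_perp)
    moreover have "0 \<in> perp (perp S)" by (simp add: perp_def)
    ultimately show ?thesis by auto
  qed
  have "card (perp S) * card (perp (perp S)) = 64" by (rule card_perp[OF perp_subgrp])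
  moreover have "card (perp S) \<ge> 8" using card_mono[OF finite sub1] c8 by simp
  moreover have "card (perp (perp S)) \<ge> 8" using card_mono[OF finite sub2] c8 by simp
  ultimately have "card (perp S) = 8"
  proof -
    assume a: "card (perp S) * card (perp (perp S)) = 64" "card (perp S) \<ge> 8" "card (perp (perp S)) \<ge> 8"
    have "card (perp S) \<le> 8"
    proof (rule ccontr)
      assume "\<not> card (perp S) \<le> 8"
      then have "9 * 8 \<le> card (perp S) * card (perp (perp S))" using a(3) by (intro mult_le_mono) auto
      then show False using a(1) by simp
    qed
    then show ?thesis using a(2) by simp
  qed
  then show "perp S = insert 0 S" using card_subset_eq[OF finite sub1] c8 by simp
qed


type_synonym b3 = "bool \<times> bool \<times> bool"

definition bz :: b3 where "bz = (False, False, False)"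

fun badd :: "b3 \<Rightarrow> b3 \<Rightarrow> b3" where
  "badd (a,b,c) (a',b',c') = (a \<noteq> a', b \<noteq> b', c \<noteq> c')"

fun dot :: "b3 \<Rightarrow> b3 \<Rightarrow> bool" where
  "dot (x1,x2,x3) (z1,z2,z3) = ((x1 \<and> z1) \<noteq> ((x2 \<and> z2) \<noteq> (x3 \<and> z3)))"

definition xv :: "pauli3 \<Rightarrow> b3" where "xv p = (case p of (a1,a2,a3) \<Rightarrow> (xb a1, xb a2, xb a3))"
definition zv :: "pauli3 \<Rightarrow> b3" where "zv p = (case p of (a1,a2,a3) \<Rightarrow> (zb a1, zb a2, zb a3))"
fun mk :: "b3 \<Rightarrow> b3 \<Rightarrow> pauli3" where
  "mk (x1,x2,x3) (z1,z2,z3) = (pk x1 z1, pk x2 z2, pk x3 z3)"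

lemma xv_mk[simp]: "xv (mk x z) = x" and zv_mk[simp]: "zv (mk x z) = z"
  by (cases x; cases z; simp add: xv_def zv_def)+

lemma mk_xv_zv[simp]: "mk (xv p) (zv p) = p"
  by (cases p) (simp add: xv_def zv_def)

lemma mk_inj[simp]: "mk x z = mk x' z' \<longleftrightarrow> x = x' \<and> z = z'"
  by (metis xv_mk zv_mk)

lemma p_eq_iff: "p = q \<longleftrightarrow> xv p = xv q \<and> zv p = zv q"
  by (metis mk_xv_zv)

lemma xv_add[simp]: "xv (p + q) = badd (xv p) (xv q)" and zv_add[simp]: "zv (p + q) = badd (zv p) (zv q)"
  by (cases p; cases q; simp add: xv_def zv_def)+

lemma xv0[simp]: "xv 0 = bz" and zv0[simp]: "zv 0 = bz"
  by (simp_all add: xv_def zv_def zero3 bz_def)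

lemma eq0_iff: "p = 0 \<longleftrightarrow> xv p = bz \<and> zv p = bz"
  by (metis p_eq_iff xv0 zv0)

lemma mk_add: "mk x z + mk x' z' = mk (badd x x') (badd z z')"
  by (simp add: p_eq_iff)

lemma mk_zero: "mk bz bz = 0"
  by (simp add: p_eq_iff)

lemma xdz_dot: "xdz P Q = dot (xv P) (zv Q)"
  by (cases P; cases Q) (simp add: xdz_def xv_def zv_def)

lemma om_coord: "om p q = (dot (xv p) (zv q) \<noteq> dot (xv q) (zv p))"
  by (simp add: om_def xdz_dot)

lemma all_b3: "(\<forall>x::b3. P x) \<longleftrightarrow> P (False,False,False) \<and> P (False,False,True) \<and> P (False,True,False)
   \<and> P (False,True,True) \<and> P (True,False,False) \<and> P (True,False,True) \<and> P (True,True,False) \<and> P (True,True,True)"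
  apply (rule iffI)
   apply simp
  apply clarify
  subgoal for a b c by (cases a; cases b; cases c; simp)
  done

lemma UNIV_b3: "(UNIV::b3 set) = {(False,False,False), (False,False,True), (False,True,False),
   (False,True,True), (True,False,False), (True,False,True), (True,True,False), (True,True,True)}"
  by auto

lemma card_b3: "card (UNIV::b3 set) = 8"
  by (simp add: UNIV_b3)

lemma badd_self[simp]: "badd x x = bz" by (cases x) (simp add: bz_def)
lemma badd_bz[simp]: "badd x bz = x" "badd bz x = x" by (cases x; simp add: bz_def)+
lemma badd_eq_bz: "badd x y = bz \<longleftrightarrow> x = y" by (cases x; cases y) (auto simp: bz_def)

type_synonym sym6 = "bool \<times> bool \<times> bool \<times> bool \<times> bool \<times> bool"

fun Tm :: "sym6 \<Rightarrow> b3 \<Rightarrow> b3" where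
  "Tm (a,b,c,d,e,f) (x1,x2,x3) = (((a \<and> x1) \<noteq> ((b \<and> x2) \<noteq> (c \<and> x3))),
      ((b \<and> x1) \<noteq> ((d \<and> x2) \<noteq> (e \<and> x3))), ((c \<and> x1) \<noteq> ((e \<and> x2) \<noteq> (f \<and> x3))))"

fun sdet :: "sym6 \<Rightarrow> bool" where
  "sdet (a,b,c,d,e,f) = ((a \<and> d \<and> f) \<noteq> ((a \<and> e) \<noteq> ((b \<and> f) \<noteq> (c \<and> d))))"

fun sadd :: "sym6 \<Rightarrow> sym6 \<Rightarrow> sym6" where
  "sadd (a,b,c,d,e,f) (a',b',c',d',e',f') = (a\<noteq>a', b\<noteq>b', c\<noteq>c', d\<noteq>d', e\<noteq>e', f\<noteq>f')"

definition gr :: "sym6 \<Rightarrow> pauli3 set" where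
  "gr T = (\<lambda>x. mk x (Tm T x)) ` (UNIV - {bz})"

lemma Tm_sadd: "Tm (sadd T T') x = badd (Tm T x) (Tm T' x)"
  by (cases T; cases T'; cases x) auto

lemma Tm_badd: "Tm T (badd x y) = badd (Tm T x) (Tm T y)"
  by (cases T; cases x; cases y) auto

lemma Tm_sym: "dot x (Tm T y) = dot y (Tm T x)"
proof -
  obtain a b c d e f where T: "T = (a,b,c,d,e,f)" by (cases T) auto
  obtain x1 x2 x3 where x: "x = (x1,x2,x3)" by (cases x) auto
  obtain y1 y2 y3 where y: "y = (y1,y2,y3)" by (cases y) auto
  show ?thesis unfolding T x y
    by (cases x1; cases x2; cases x3; cases y1; cases y2; cases y3; cases a; cases b; cases c; cases d; cases e; cases f) simp_all
qed

lemma sdet_iff: "sdet T \<longleftrightarrow> (\<forall>x. x \<noteq> bz \<longrightarrow> Tm T x \<noteq> bz)"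
proof -
  obtain a b c d e f where T: "T = (a,b,c,d,e,f)" by (cases T) auto
  show ?thesis unfolding T all_b3
    by (cases a; cases b; cases c; cases d; cases e; cases f) (simp_all add: bz_def)
qed

lemma sadd_comm: "sadd T T' = sadd T' T"
  by (cases T; cases T') auto


definition X0 :: "pauli3 set" where "X0 = {p. p \<noteq> 0 \<and> zv p = bz}"
definition Z0 :: "pauli3 set" where "Z0 = {p. p \<noteq> 0 \<and> xv p = bz}"

lemma mk_eq0: "mk x z = 0 \<longleftrightarrow> x = bz \<and> z = bz"
  by (simp add: eq0_iff)

lemma gr_mem: "p \<in> gr T \<longleftrightarrow> xv p \<noteq> bz \<and> zv p = Tm T (xv p)"
  unfolding gr_def by (auto simp: p_eq_iff)

lemma gr_class: "max_comm_class (gr T)"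
proof -
  have inj: "inj_on (\<lambda>x. mk x (Tm T x)) (UNIV - {bz})"
    by (rule inj_onI) simp
  have "card (gr T) = card (UNIV - {bz} :: b3 set)"
    unfolding gr_def by (rule card_image[OF inj])
  also have "\<dots> = 7" by (simp add: card_b3)
  finally have c: "card (gr T) = 7" .
  have n: "gr T \<subseteq> nonid_paulis" by (auto simp: nonid_eq gr_mem)
  have "\<forall>P\<in>gr T. \<forall>Q\<in>gr T. \<not> om P Q"
    by (auto simp: gr_mem om_coord Tm_sym)
  then show ?thesis using c n by (simp add: max_comm_class_def commute_iff)
qed

lemma gr_Z0: "gr T \<inter> Z0 = {}"
  by (auto simp: gr_mem Z0_def)

lemma gr_X0: "gr T \<inter> X0 = {} \<longleftrightarrow> sdet T"
proof
  assume a: "gr T \<inter> X0 = {}"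
  show "sdet T" unfolding sdet_iff
  proof (intro allI impI)
    fix x assume x: "x \<noteq> bz"
    show "Tm T x \<noteq> bz"
    proof
      assume "Tm T x = bz"
      then have "mk x bz \<in> gr T \<inter> X0" using x by (auto simp: gr_mem X0_def mk_eq0)
      then show False using a by auto
    qed
  qed
next
  assume s: "sdet T"
  show "gr T \<inter> X0 = {}"
  proof (rule equals0I)
    fix p assume "p \<in> gr T \<inter> X0"
    then have "xv p \<noteq> bz \<and> zv p = Tm T (xv p) \<and> zv p = bz" using gr_mem[of p T] unfolding X0_def by blast
    then show False using s sdet_iff by metis
  qed
qed

lemma gr_disj: "gr T \<inter> gr T' = {} \<longleftrightarrow> sdet (sadd T T')"
proof
  assume a: "gr T \<inter> gr T' = {}"
  show "sdet (sadd T T')" unfolding sdet_iff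
  proof (intro allI impI)
    fix x assume x: "x \<noteq> bz"
    show "Tm (sadd T T') x \<noteq> bz"
    proof
      assume "Tm (sadd T T') x = bz"
      then have "Tm T x = Tm T' x" by (simp add: Tm_sadd badd_eq_bz)
      then have "mk x (Tm T x) \<in> gr T \<inter> gr T'" using x by (auto simp: gr_mem)
      then show False using a by auto
    qed
  qed
next
  assume s: "sdet (sadd T T')"
  show "gr T \<inter> gr T' = {}"
  proof (rule equals0I)
    fix p assume "p \<in> gr T \<inter> gr T'"
    then have "xv p \<noteq> bz \<and> zv p = Tm T (xv p) \<and> zv p = Tm T' (xv p)" using gr_mem[of p T] gr_mem[of p T'] by blast
    then have "xv p \<noteq> bz" "Tm (sadd T T') (xv p) = bz" by (auto simp: Tm_sadd)
    then show False using s sdet_iff by metis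
  qed
qed

lemma e_vectors: "Tm T (True,False,False) = (fst T, fst (snd T), fst (snd (snd T)))"
  "Tm T (False,True,False) = (fst (snd T), fst (snd (snd (snd T))), fst (snd (snd (snd (snd T)))))"
  "Tm T (False,False,True) = (fst (snd (snd T)), fst (snd (snd (snd (snd T)))), snd (snd (snd (snd (snd T)))))"
  by (cases T; simp)+

lemma gr_inj: assumes "gr T = gr T'" shows "T = T'"
proof -
  have "Tm T x = Tm T' x" if "x \<noteq> bz" for x
  proof -
    have "mk x (Tm T x) \<in> gr T" using that by (simp only: gr_mem xv_mk zv_mk) simp
    then have "mk x (Tm T x) \<in> gr T'" using assms by simp
    then show ?thesis by (simp only: gr_mem xv_mk zv_mk)
  qed
  then have "Tm T (True,False,False) = Tm T' (True,False,False)"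
     "Tm T (False,True,False) = Tm T' (False,True,False)"
     "Tm T (False,False,True) = Tm T' (False,False,True)" by (auto simp: bz_def)
  then show ?thesis by (cases T; cases T'; simp)
qed


lemma additive_eq:
  assumes f: "\<And>x y. f (badd x y) = badd (f x) (f y)" and g: "\<And>x y. g (badd x y) = badd (g x) (g y)"
    and e: "f (True,False,False) = g (True,False,False)" "f (False,True,False) = g (False,True,False)"
           "f (False,False,True) = g (False,False,True)"
  shows "f x = g x"
proof -
  have f0: "f bz = bz" using f[of bz bz] by (metis badd_self)
  have g0: "g bz = bz" using g[of bz bz] by (metis badd_self)
  have b: "(True,True,False) = badd (True,False,False) (False,True,False)"
     "(True,False,True) = badd (True,False,False) (False,False,True)"
     "(False,True,True) = badd (False,True,False) (False,False,True)"
     "(True,True,True) = badd (badd (True,False,False) (False,True,False)) (False,False,True)"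
    by simp_all
  have "\<forall>x. f x = g x" unfolding all_b3
    using f0 g0 e by (simp only: b f g bz_def[symmetric])
  then show ?thesis by (cases x) simp
qed

lemma graph_char:
  assumes D: "max_comm_class D" and DZ: "D \<inter> Z0 = {}"
  shows "\<exists>T. D = gr T"
proof -
  define M where "M = insert 0 D"
  have Mp: "perp D = M" using mcc_perp(1)[OF D] by (simp add: M_def)
  have Mcl: "p \<in> M \<Longrightarrow> q \<in> M \<Longrightarrow> p + q \<in> M" for p q
    using perp_subgrp[of D] unfolding Mp subgrp_def by blast
  have Miso: "p \<in> M \<Longrightarrow> q \<in> M \<Longrightarrow> \<not> om p q" for p q
    using Mp unfolding M_def perp_def by auto
  have uniq: "p = q" if "p \<in> M" "q \<in> M" "xv p = xv q" for p q
  proof (rule ccontr)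
    assume "p \<noteq> q"
    then have "p + q \<noteq> 0" by (simp add: add_eq_zero3)
    moreover have "p + q \<in> M" using Mcl that by blast
    moreover have "xv (p + q) = bz" using that by simp
    ultimately have "p + q \<in> D \<inter> Z0" by (auto simp: M_def Z0_def)
    then show False using DZ by blast
  qed
  have finM: "finite M" by simp
  have cM: "card M = 8" using mcc_perp[OF D] by (simp add: M_def)
  have "inj_on xv M" using uniq by (auto intro: inj_onI)
  then have "card (xv ` M) = 8" using cM card_image by metis
  then have imM: "xv ` M = UNIV" using card_b3 by (metis card_subset_eq finite subset_UNIV)
  define tau where "tau x = zv (SOME p. p \<in> M \<and> xv p = x)" for x
  have tauM: "mk x (tau x) \<in> M" for x
  proof -
    have "\<exists>p. p \<in> M \<and> xv p = x" using imM by (metis UNIV_I image_iff)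
    then have "(SOME p. p \<in> M \<and> xv p = x) \<in> M \<and> xv (SOME p. p \<in> M \<and> xv p = x) = x"
      by (rule someI_ex)
    then show ?thesis unfolding tau_def by (metis mk_xv_zv)
  qed
  have zvM: "zv p = tau (xv p)" if "p \<in> M" for p
    using uniq[OF that tauM[of "xv p"]] by (metis zv_mk xv_mk)
  have tadd: "tau (badd x y) = badd (tau x) (tau y)" for x y
  proof -
    have "mk x (tau x) + mk y (tau y) \<in> M" using Mcl tauM by blast
    then show ?thesis using zvM by (fastforce simp: mk_add)
  qed
  have tsym: "dot x (tau y) = dot y (tau x)" for x y
    using Miso[OF tauM[of x] tauM[of y]] by (simp add: om_coord)
  obtain a b c where u1: "tau (True,False,False) = (a,b,c)" by (metis prod_cases3)
  obtain b2 d e where u2: "tau (False,True,False) = (b2,d,e)" by (metis prod_cases3)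
  obtain c3 e3 f where u3: "tau (False,False,True) = (c3,e3,f)" by (metis prod_cases3)
  have "b2 = b" using tsym[of "(True,False,False)" "(False,True,False)"] u1 u2 by simp
  moreover have "c3 = c" using tsym[of "(True,False,False)" "(False,False,True)"] u1 u3 by simp
  moreover have "e3 = e" using tsym[of "(False,True,False)" "(False,False,True)"] u2 u3 by simp
  ultimately have u: "tau (True,False,False) = Tm (a,b,c,d,e,f) (True,False,False)"
     "tau (False,True,False) = Tm (a,b,c,d,e,f) (False,True,False)"
     "tau (False,False,True) = Tm (a,b,c,d,e,f) (False,False,True)" using u1 u2 u3 by simp_all
  have tT: "tau x = Tm (a,b,c,d,e,f) x" for x
    by (rule additive_eq[OF tadd Tm_badd u])
  have t0: "tau bz = bz" using tadd[of bz bz] by simp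
  have "D = gr (a,b,c,d,e,f)"
  proof (rule subset_antisym; rule subsetI)
    fix p assume p: "p \<in> D"
    then have pM: "p \<in> M" "p \<noteq> 0" using mcc_perp(2)[OF D] by (auto simp: M_def)
    have "xv p \<noteq> bz" using zvM[OF pM(1)] t0 pM(2) eq0_iff by metis
    then show "p \<in> gr (a,b,c,d,e,f)" using zvM[OF pM(1)] by (simp add: gr_mem tT)
  next
    fix p assume "p \<in> gr (a,b,c,d,e,f)"
    then have p: "xv p \<noteq> bz" "zv p = tau (xv p)" by (simp_all add: gr_mem tT)
    then have "p = mk (xv p) (tau (xv p))" by (metis mk_xv_zv)
    then have "p \<in> M" using tauM by metis
    moreover have "p \<noteq> 0" using p(1) by auto
    ultimately show "p \<in> D" by (simp add: M_def)
  qed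
  then show ?thesis by blast
qed

definition L28 :: "sym6 list" where "L28 = [(False,False,True,True,False,False), (False,False,True,True,False,True), (False,False,True,True,True,False), (False,False,True,True,True,True), (False,True,False,False,False,True), (False,True,False,False,True,True), (False,True,False,True,False,True), (False,True,False,True,True,True), (False,True,True,False,False,True), (False,True,True,False,True,True), (False,True,True,True,False,False), (False,True,True,True,True,False), (True,False,False,False,True,False), (True,False,False,False,True,True), (True,False,False,True,False,True), (True,False,False,True,True,False), (True,False,True,False,True,False), (True,False,True,False,True,True), (True,False,True,True,False,False), (True,False,True,True,True,True), (True,True,False,False,False,True), (True,True,False,False,True,False), (True,True,False,True,True,False), (True,True,False,True,True,True), (True,True,True,False,False,True), (True,True,True,False,True,False), (True,True,True,True,False,False), (True,True,True,True,False,True)]"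

lemma L28_set: "T \<in> set L28 \<longleftrightarrow> sdet T"
proof -
  obtain a b c d e f where T: "T = (a,b,c,d,e,f)" by (cases T) auto
  show ?thesis unfolding T
    by (cases a; cases b; cases c; cases d; cases e; cases f) (simp_all add: L28_def)
qed

lemma L28_distinct: "distinct L28" by (simp add: L28_def)

definition chk :: bool where
 "chk = (\<forall>t3\<in>set L28. \<forall>t4\<in>set L28. sdet (sadd t3 t4) \<longrightarrow>
     (let A = filter (\<lambda>t. sdet (sadd t t3) \<and> sdet (sadd t t4)) L28 in
      length A = 6 \<and> (\<forall>t\<in>set A. \<exists>s\<in>set A. s \<noteq> t \<and> \<not> sdet (sadd s t))))"

lemma chk_true: chk by code_simp

definition Av4 :: "pauli3 set \<Rightarrow> pauli3 set \<Rightarrow> pauli3 set \<Rightarrow> pauli3 set \<Rightarrow> pauli3 set set" where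
  "Av4 A1 A2 A3 A4 = {D. max_comm_class D \<and> D \<inter> A1 = {} \<and> D \<inter> A2 = {} \<and> D \<inter> A3 = {} \<and> D \<inter> A4 = {}}"

lemma K_std:
  assumes B3: "max_comm_class B3" and B4: "max_comm_class B4"
    and d: "B3 \<inter> Z0 = {}" "B3 \<inter> X0 = {}" "B4 \<inter> Z0 = {}" "B4 \<inter> X0 = {}" "B3 \<inter> B4 = {}"
  shows "card (Av4 Z0 X0 B3 B4) = 6 \<and> (\<forall>D\<in>Av4 Z0 X0 B3 B4. \<exists>D'\<in>Av4 Z0 X0 B3 B4. D' \<noteq> D \<and> D \<inter> D' \<noteq> {})"
proof -
  obtain T3 where T3: "B3 = gr T3" using graph_char[OF B3 d(1)] by blast
  obtain T4 where T4: "B4 = gr T4" using graph_char[OF B4 d(3)] by blast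
  have s3: "sdet T3" using d(2) T3 gr_X0 by blast
  have s4: "sdet T4" using d(4) T4 gr_X0 by blast
  have s34: "sdet (sadd T3 T4)" using d(5) T3 T4 gr_disj by blast
  define A where "A = filter (\<lambda>t. sdet (sadd t T3) \<and> sdet (sadd t T4)) L28"
  have chk': "length A = 6 \<and> (\<forall>t\<in>set A. \<exists>s\<in>set A. s \<noteq> t \<and> \<not> sdet (sadd s t))"
    using chk_true s3 s4 s34 unfolding chk_def A_def Let_def by (simp add: L28_set)
  have Aset: "t \<in> set A \<longleftrightarrow> sdet t \<and> sdet (sadd t T3) \<and> sdet (sadd t T4)" for t
    by (auto simp: A_def L28_set)
  have Av: "Av4 Z0 X0 B3 B4 = gr ` set A"
  proof (rule subset_antisym; rule subsetI)
    fix D assume "D \<in> Av4 Z0 X0 B3 B4"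
    then have D: "max_comm_class D" "D \<inter> Z0 = {}" "D \<inter> X0 = {}" "D \<inter> B3 = {}" "D \<inter> B4 = {}"
      by (auto simp: Av4_def)
    obtain T where T: "D = gr T" using graph_char[OF D(1,2)] by blast
    have "T \<in> set A" using D T T3 T4 by (simp add: Aset gr_X0 gr_disj)
    then show "D \<in> gr ` set A" using T by blast
  next
    fix D assume "D \<in> gr ` set A"
    then obtain T where T: "D = gr T" "T \<in> set A" by blast
    then show "D \<in> Av4 Z0 X0 B3 B4"
      using T3 T4 by (auto simp: Av4_def Aset gr_X0 gr_disj gr_class gr_Z0 simp del: Int_empty_right Int_empty_left)
  qed
  have injg: "inj_on gr (set A)" by (rule inj_onI) (rule gr_inj)
  have dA: "distinct A" by (simp add: A_def L28_distinct)
  have "card (Av4 Z0 X0 B3 B4) = 6"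
    unfolding Av using card_image[OF injg] chk' distinct_card[OF dA] by simp
  moreover have "\<forall>D\<in>Av4 Z0 X0 B3 B4. \<exists>D'\<in>Av4 Z0 X0 B3 B4. D' \<noteq> D \<and> D \<inter> D' \<noteq> {}"
  proof
    fix D assume "D \<in> Av4 Z0 X0 B3 B4"
    then obtain t where t: "D = gr t" "t \<in> set A" unfolding Av by blast
    then obtain s where s: "s \<in> set A" "s \<noteq> t" "\<not> sdet (sadd s t)" using chk' by blast
    have "gr s \<noteq> gr t" using s(2) gr_inj by metis
    moreover have "gr t \<inter> gr s \<noteq> {}" using s(3) gr_disj sadd_comm by metis
    ultimately show "\<exists>D'\<in>Av4 Z0 X0 B3 B4. D' \<noteq> D \<and> D \<inter> D' \<noteq> {}"
      unfolding Av using s(1) t(1) by blast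
  qed
  ultimately show ?thesis by blast
qed


definition sympm :: "(pauli3 \<Rightarrow> pauli3) \<Rightarrow> bool" where
  "sympm f \<longleftrightarrow> bij f \<and> (\<forall>x y. f (x + y) = f x + f y) \<and> (\<forall>x y. om (f x) (f y) = om x y)"

lemma sympm_zero: "sympm f \<Longrightarrow> f 0 = 0"
  unfolding sympm_def by (metis add_eq_zero3 add.right_neutral)

lemma sympm_inv: assumes f: "sympm f" shows "sympm (inv_into UNIV f)"
proof -
  have b: "bij f" and a: "\<And>x y. f (x + y) = f x + f y" and o: "\<And>x y. om (f x) (f y) = om x y"
    using f by (auto simp: sympm_def)
  have fi: "f (inv_into UNIV f x) = x" for x using b by (simp add: bij_is_surj surj_f_inv_f)
  have "inv_into UNIV f (x + y) = inv_into UNIV f x + inv_into UNIV f y" for x y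
  proof -
    have "f (inv_into UNIV f x + inv_into UNIV f y) = x + y" using a fi by simp
    then show ?thesis using b by (metis bij_inv_eq_iff)
  qed
  moreover have "om (inv_into UNIV f x) (inv_into UNIV f y) = om x y" for x y
    using o[of "inv_into UNIV f x" "inv_into UNIV f y"] fi by simp
  ultimately show ?thesis using b bij_imp_bij_inv unfolding sympm_def by blast
qed

lemma sympm_class: assumes f: "sympm f" shows "max_comm_class (f ` D) \<longleftrightarrow> max_comm_class D"
proof -
  have b: "inj f" and o: "\<And>x y. om (f x) (f y) = om x y"
    using f by (auto simp: sympm_def bij_is_inj)
  have z: "f x = 0 \<longleftrightarrow> x = 0" for x using sympm_zero[OF f] b by (metis injD)
  have c: "card (f ` D) = card D" using b by (simp add: card_image inj_on_subset)
  have n: "f ` D \<subseteq> nonid_paulis \<longleftrightarrow> D \<subseteq> nonid_paulis"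
    using z unfolding nonid_eq image_subset_iff by auto
  have m: "(\<forall>P\<in>f ` D. \<forall>Q\<in>f ` D. commute P Q) \<longleftrightarrow> (\<forall>P\<in>D. \<forall>Q\<in>D. commute P Q)"
    by (simp add: commute_iff o)
  show ?thesis unfolding max_comm_class_def using c n m by simp
qed

lemma sympm_disj: assumes f: "sympm f" shows "f ` X \<inter> f ` Y = {} \<longleftrightarrow> X \<inter> Y = {}"
  using f by (auto simp: sympm_def bij_def image_Int[symmetric])

type_synonym trip = "pauli3 \<times> pauli3 \<times> pauli3"

fun lin :: "b3 \<Rightarrow> trip \<Rightarrow> pauli3" where
  "lin (x1,x2,x3) (e1,e2,e3) = (if x1 then e1 else 0) + (if x2 then e2 else 0) + (if x3 then e3 else 0)"

lemma add_self_left3[simp]: "(a::pauli3) + (a + b) = b"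
  by (simp flip: add.assoc)

lemma lin_badd: "lin (badd x y) E = lin x E + lin y E"
  by (cases E; cases x; cases y) (auto simp: add_ac)

lemma lin_bz[simp]: "lin bz E = 0"
  by (cases E) (simp add: bz_def)

lemma om_if_left: "om (if c then e else 0) w = (c \<and> om e w)"
  by simp

lemma om_lin_left: "om (lin x (e1,e2,e3)) w = dot x (om e1 w, om e2 w, om e3 w)"
  by (cases x) (auto simp: om_add_left)

lemma om_lin_right: "om w (lin x (e1,e2,e3)) = dot x (om e1 w, om e2 w, om e3 w)"
  by (metis om_sym om_lin_left)

lemma dot_comm: "dot x z = dot z x"
  by (cases x; cases z) auto

lemma dot_units: "dot x (True,False,False) = fst x" "dot x (False,True,False) = fst (snd x)"
  "dot x (False,False,True) = snd (snd x)"
  by (cases x; simp)+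

lemma lin_mem: assumes "subgrp M" "e1 \<in> M" "e2 \<in> M" "e3 \<in> M" shows "lin x (e1,e2,e3) \<in> M"
  using assms by (cases x) (auto simp: subgrp_def)

lemma lin_image: assumes M: "subgrp M" "card M = 8" and E: "e1 \<in> M" "e2 \<in> M" "e3 \<in> M"
   and nz: "\<And>x. lin x (e1,e2,e3) = 0 \<Longrightarrow> x = bz"
  shows "(\<lambda>x. lin x (e1,e2,e3)) ` UNIV = M" "inj (\<lambda>x. lin x (e1,e2,e3))"
proof -
  show inj: "inj (\<lambda>x. lin x (e1,e2,e3))"
  proof (rule injI)
    fix x y assume "lin x (e1,e2,e3) = lin y (e1,e2,e3)"
    then have "lin (badd x y) (e1,e2,e3) = 0" by (simp add: lin_badd)
    then show "x = y" using nz badd_eq_bz by blast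
  qed
  have sub: "(\<lambda>x. lin x (e1,e2,e3)) ` UNIV \<subseteq> M" using lin_mem[OF M(1) E] by blast
  have "card ((\<lambda>x. lin x (e1,e2,e3)) ` UNIV) = 8" using card_image[OF inj] card_b3 by simp
  then show "(\<lambda>x. lin x (e1,e2,e3)) ` UNIV = M"
    using card_subset_eq[OF _ sub] M(2) by (metis finite)
qed

lemma class_subgrp: assumes "max_comm_class A" shows "subgrp (insert 0 A)" "card (insert 0 A) = 8"
  "\<And>p q. p \<in> insert 0 A \<Longrightarrow> q \<in> insert 0 A \<Longrightarrow> \<not> om p q"
proof -
  show "subgrp (insert 0 A)" using perp_subgrp[of A] mcc_perp(1)[OF assms] by simp
  show "card (insert 0 A) = 8" using mcc_perp[OF assms] by simp
  fix p q assume "p \<in> insert 0 A" "q \<in> insert 0 A"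
  then show "\<not> om p q" using mcc_perp(1)[OF assms] unfolding perp_def by auto
qed

lemma basis_exists: assumes A: "max_comm_class A"
  shows "\<exists>e1 e2 e3. e1 \<in> A \<and> e2 \<in> A \<and> e3 \<in> A \<and> (\<forall>x. lin x (e1,e2,e3) = 0 \<longrightarrow> x = bz)"
proof -
  have c: "card A = 7" "finite A" "0 \<notin> A" using mcc_perp[OF A] by auto
  have cl: "p \<in> A \<Longrightarrow> q \<in> A \<Longrightarrow> p \<noteq> q \<Longrightarrow> p + q \<in> A" for p q
    using class_subgrp(1)[OF A] add_eq_zero3 by (auto simp: subgrp_def)
  have "A \<noteq> {}" using c by auto
  then obtain e1 where e1: "e1 \<in> A" by blast
  have "card (A - {e1}) = 6" using c e1 by simp
  then have "A - {e1} \<noteq> {}" by (metis card.empty zero_neq_numeral)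
  then obtain e2 where e2: "e2 \<in> A" "e2 \<noteq> e1" by blast
  have "card (A - {e1,e2,e1+e2}) \<ge> 4"
  proof -
    have "card {e1,e2,e1+e2} \<le> 3" by (auto simp: card_insert_if)
    then show ?thesis using c diff_card_le_card_Diff[of "{e1,e2,e1+e2}" A] by simp
  qed
  then have "A - {e1,e2,e1+e2} \<noteq> {}" by (metis card.empty not_numeral_le_zero)
  then obtain e3 where e3: "e3 \<in> A" "e3 \<notin> {e1,e2,e1+e2}" by blast
  have nz: "lin x (e1,e2,e3) = 0 \<longrightarrow> x = bz" for x
  proof -
    have ne: "e1 \<noteq> 0" "e2 \<noteq> 0" "e3 \<noteq> 0" using e1 e2 e3 c by auto
    have "e1 + e2 \<noteq> 0" "e1 + e3 \<noteq> 0" "e2 + e3 \<noteq> 0" "e1 + e2 + e3 \<noteq> 0"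
      using e2 e3 add_eq_zero3 by (auto simp: add_eq_zero3)
    then show ?thesis using ne by (cases x) (auto simp: bz_def)
  qed
  then show ?thesis using e1 e2 e3 by blast
qed


lemma lin_units: "lin (True,False,False) E = fst E" "lin (False,True,False) E = fst (snd E)"
  "lin (False,False,True) E = snd (snd E)"
  by (cases E; simp)+

lemma frame_exists:
  assumes A1: "max_comm_class A1" and A2: "max_comm_class A2" and d: "A1 \<inter> A2 = {}"
  shows "\<exists>\<phi>. sympm \<phi> \<and> \<phi> ` Z0 = A1 \<and> \<phi> ` X0 = A2"
proof -
  define M1 where "M1 = insert 0 A1"
  define M2 where "M2 = insert 0 A2"
  note M1 = class_subgrp[OF A1, folded M1_def]
  note M2 = class_subgrp[OF A2, folded M2_def]
  have pA2: "perp A2 = M2" using mcc_perp(1)[OF A2] by (simp add: M2_def)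
  have z1: "0 \<notin> A1" and z2: "0 \<notin> A2" using mcc_perp(2) A1 A2 by auto
  obtain e1 e2 e3 where e: "e1 \<in> A2" "e2 \<in> A2" "e3 \<in> A2" and enz: "\<forall>x. lin x (e1,e2,e3) = 0 \<longrightarrow> x = bz"
    using basis_exists[OF A2] by blast
  have eM: "e1 \<in> M2" "e2 \<in> M2" "e3 \<in> M2" using e by (auto simp: M2_def)
  note linE = lin_image[OF M2(1,2) eM, of ] 
  have imE: "(\<lambda>x. lin x (e1,e2,e3)) ` UNIV = M2" "inj (\<lambda>x. lin x (e1,e2,e3))"
    using lin_image[OF M2(1,2) eM] enz by blast+
  define del where "del q = (om q e1, om q e2, om q e3)" for q
  have injd: "inj_on del M1"
  proof (rule inj_onI)
    fix q q' assume q: "q \<in> M1" "q' \<in> M1" "del q = del q'"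
    define r where "r = q + q'"
    have r0: "\<not> om r e1" "\<not> om r e2" "\<not> om r e3" using q(3) by (auto simp: del_def r_def om_add_left)
    have "\<not> om r a" if "a \<in> A2" for a
    proof -
      have "a \<in> M2" using that by (simp add: M2_def)
      then obtain x where "a = lin x (e1,e2,e3)" using imE(1) by blast
      then show ?thesis using r0 by (cases x) (simp add: om_add_right)
    qed
    then have "r \<in> M2" using pA2 by (auto simp: perp_def)
    moreover have "r \<in> M1" using M1(1) q by (simp add: subgrp_def r_def)
    ultimately have "r = 0" using d by (auto simp: M1_def M2_def)
    then show "q = q'" by (simp add: r_def add_eq_zero3)
  qed
  have "card (del ` M1) = 8" using card_image[OF injd] M1(2) by simp
  then have imd: "del ` M1 = UNIV" using card_b3 by (metis card_subset_eq finite subset_UNIV)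
  obtain f1 where f1: "f1 \<in> M1" "del f1 = (True,False,False)" using imd by (metis UNIV_I imageE)
  obtain f2 where f2: "f2 \<in> M1" "del f2 = (False,True,False)" using imd by (metis UNIV_I imageE)
  obtain f3 where f3: "f3 \<in> M1" "del f3 = (False,False,True)" using imd by (metis UNIV_I imageE)
  have fe: "om f1 e1" "\<not> om f1 e2" "\<not> om f1 e3" "\<not> om f2 e1" "om f2 e2" "\<not> om f2 e3"
     "\<not> om f3 e1" "\<not> om f3 e2" "om f3 e3" using f1 f2 f3 by (simp_all add: del_def)
  let ?E = "(e1,e2,e3)" let ?F = "(f1,f2,f3)"
  have omeF: "om e1 (lin z ?F) = fst z" "om e2 (lin z ?F) = fst (snd z)" "om e3 (lin z ?F) = snd (snd z)" for z
    unfolding om_lin_right using fe by (simp_all add: dot_units)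
  have omEF: "om (lin x ?E) (lin z ?F) = dot x z" for x z
    unfolding om_lin_left omeF by (cases z) simp
  have omEE: "\<not> om (lin x ?E) (lin y ?E)" for x y
    using M2(3) lin_mem[OF M2(1) eM] by blast
  have omFF: "\<not> om (lin x ?F) (lin y ?F)" for x y
    using M1(3) lin_mem[OF M1(1) f1(1) f2(1) f3(1)] by blast
  have Fnz: "lin z ?F = 0 \<longrightarrow> z = bz" for z
  proof
    assume "lin z ?F = 0"
    then have "\<not> om e1 (lin z ?F)" "\<not> om e2 (lin z ?F)" "\<not> om e3 (lin z ?F)" by simp_all
    then show "z = bz" unfolding omeF by (cases z) (simp add: bz_def)
  qed
  have imF: "(\<lambda>x. lin x ?F) ` UNIV = M1"
    using lin_image[OF M1(1,2) f1(1) f2(1) f3(1)] Fnz by blast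
  define phi where "phi p = lin (xv p) ?E + lin (zv p) ?F" for p
  have padd: "phi (p + q) = phi p + phi q" for p q
    by (simp add: phi_def lin_badd add_ac)
  have pom: "om (phi p) (phi q) = om p q" for p q
  proof -
    have "om (phi p) (phi q) = ((om (lin (xv p) ?E) (lin (xv q) ?E) \<noteq> om (lin (zv p) ?F) (lin (xv q) ?E))
       \<noteq> (om (lin (xv p) ?E) (lin (zv q) ?F) \<noteq> om (lin (zv p) ?F) (lin (zv q) ?F)))"
      unfolding phi_def om_add_left om_add_right by (rule refl)
    also have "\<dots> = (dot (xv p) (zv q) \<noteq> dot (xv q) (zv p))"
      using omEF omEE omFF om_sym[of "lin (zv p) ?F" "lin (xv q) ?E"] by auto
    also have "\<dots> = om p q" by (simp add: om_coord)
    finally show ?thesis .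
  qed
  have "inj phi"
  proof (rule injI)
    fix p q assume "phi p = phi q"
    then have h: "om (p + q) r = False" for r using pom[of p r] pom[of q r] by (simp add: om_add_left)
    have "p + q = 0"
    proof (rule ccontr)
      assume "p + q \<noteq> 0"
      then obtain v where "om v (p + q)" using exists_anti by blast
      then show False using h[of v] om_sym by metis
    qed
    then show "p = q" by (simp add: add_eq_zero3)
  qed
  then have bij: "bij phi" by (simp add: bij_def finite_UNIV_inj_surj)
  have sy: "sympm phi" using bij padd pom by (simp add: sympm_def)
  have X: "phi ` X0 = A2"
  proof (rule subset_antisym; rule subsetI)
    fix a assume "a \<in> phi ` X0"
    then obtain p where p: "p \<noteq> 0" "zv p = bz" "a = phi p" by (auto simp: X0_def)
    have "xv p \<noteq> bz" using p eq0_iff by blast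
    moreover have "a = lin (xv p) ?E" using p by (simp add: phi_def)
    ultimately have "a \<noteq> 0" using enz by metis
    moreover have "a \<in> M2" using p lin_mem[OF M2(1) eM] by (simp add: phi_def)
    ultimately show "a \<in> A2" by (simp add: M2_def)
  next
    fix a assume a: "a \<in> A2"
    have "a \<in> (\<lambda>x. lin x ?E) ` UNIV" using a imE(1) unfolding M2_def by blast
    then obtain x where x: "a = lin x ?E" by blast
    have "x \<noteq> bz" using x a z2 by auto
    then have "mk x bz \<in> X0" by (simp add: X0_def mk_eq0)
    moreover have "phi (mk x bz) = a" using x by (simp add: phi_def)
    ultimately show "a \<in> phi ` X0" by force
  qed
  have Z: "phi ` Z0 = A1"
  proof (rule subset_antisym; rule subsetI)
    fix a assume "a \<in> phi ` Z0"
    then obtain p where p: "p \<noteq> 0" "xv p = bz" "a = phi p" by (auto simp: Z0_def)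
    have "zv p \<noteq> bz" using p eq0_iff by blast
    moreover have "a = lin (zv p) ?F" using p by (simp add: phi_def)
    ultimately have "a \<noteq> 0" using Fnz by metis
    moreover have "a \<in> M1" using p lin_mem[OF M1(1) f1(1) f2(1) f3(1)] by (simp add: phi_def)
    ultimately show "a \<in> A1" by (simp add: M1_def)
  next
    fix a assume a: "a \<in> A1"
    have "a \<in> (\<lambda>x. lin x ?F) ` UNIV" using a imF unfolding M1_def by blast
    then obtain x where x: "a = lin x ?F" by blast
    have "x \<noteq> bz" using x a z1 by auto
    then have "mk bz x \<in> Z0" by (simp add: Z0_def mk_eq0)
    moreover have "phi (mk bz x) = a" using x by (simp add: phi_def)
    ultimately show "a \<in> phi ` Z0" by force
  qed
  show ?thesis using sy X Z by blast
qed


lemma K: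
  assumes c: "max_comm_class A1" "max_comm_class A2" "max_comm_class A3" "max_comm_class A4"
    and d: "A1 \<inter> A2 = {}" "A1 \<inter> A3 = {}" "A1 \<inter> A4 = {}" "A2 \<inter> A3 = {}" "A2 \<inter> A4 = {}" "A3 \<inter> A4 = {}"
  shows "card (Av4 A1 A2 A3 A4) = 6 \<and> (\<forall>D\<in>Av4 A1 A2 A3 A4. \<exists>D'\<in>Av4 A1 A2 A3 A4. D' \<noteq> D \<and> D \<inter> D' \<noteq> {})"
proof -
  obtain phi where phi: "sympm phi" "phi ` Z0 = A1" "phi ` X0 = A2"
    using frame_exists[OF c(1,2) d(1)] by blast
  define psi where "psi = inv_into UNIV phi"
  have psi: "sympm psi" using sympm_inv[OF phi(1)] by (simp add: psi_def)
  have bphi: "bij phi" using phi(1) by (simp add: sympm_def)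
  have pp: "phi ` (psi ` X) = X" for X
    using bphi unfolding psi_def by (simp add: image_image bij_is_surj surj_f_inv_f)
  define B3 where "B3 = psi ` A3"
  define B4 where "B4 = psi ` A4"
  have cB3: "max_comm_class B3" using sympm_class[OF psi, of A3] c(3) unfolding B3_def by blast
  have cB4: "max_comm_class B4" using sympm_class[OF psi, of A4] c(4) unfolding B4_def by blast
  have iB3: "phi ` B3 = A3" and iB4: "phi ` B4 = A4" by (simp_all add: B3_def B4_def pp)
  have dis: "phi ` X \<inter> phi ` Y = {} \<longleftrightarrow> X \<inter> Y = {}" for X Y using sympm_disj[OF phi(1)] by simp
  have dB: "B3 \<inter> Z0 = {}" "B3 \<inter> X0 = {}" "B4 \<inter> Z0 = {}" "B4 \<inter> X0 = {}" "B3 \<inter> B4 = {}"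
  proof -
    show "B3 \<inter> Z0 = {}" using dis[of B3 Z0] d(2) unfolding iB3 phi(2) by blast
    show "B3 \<inter> X0 = {}" using dis[of B3 X0] d(4) unfolding iB3 phi(3) by blast
    show "B4 \<inter> Z0 = {}" using dis[of B4 Z0] d(3) unfolding iB4 phi(2) by blast
    show "B4 \<inter> X0 = {}" using dis[of B4 X0] d(5) unfolding iB4 phi(3) by blast
    show "B3 \<inter> B4 = {}" using dis[of B3 B4] d(6) unfolding iB3 iB4 by blast
  qed
  note Ks = K_std[OF cB3 cB4 dB]
  have Av: "Av4 A1 A2 A3 A4 = (\<lambda>E. phi ` E) ` Av4 Z0 X0 B3 B4"
  proof (rule subset_antisym; rule subsetI)
    fix D assume "D \<in> Av4 A1 A2 A3 A4"
    then have D: "max_comm_class D" "D \<inter> A1 = {}" "D \<inter> A2 = {}" "D \<inter> A3 = {}" "D \<inter> A4 = {}"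
      by (auto simp: Av4_def)
    define E where "E = psi ` D"
    have E: "phi ` E = D" unfolding E_def by (rule pp)
    have "max_comm_class E" using sympm_class[OF phi(1), of E] D(1) E by simp
    moreover have "E \<inter> Z0 = {}" using dis[of E Z0] D(2) unfolding E phi(2) by blast
    moreover have "E \<inter> X0 = {}" using dis[of E X0] D(3) unfolding E phi(3) by blast
    moreover have "E \<inter> B3 = {}" using dis[of E B3] D(4) unfolding E iB3 by blast
    moreover have "E \<inter> B4 = {}" using dis[of E B4] D(5) unfolding E iB4 by blast
    ultimately have "E \<in> Av4 Z0 X0 B3 B4" by (simp add: Av4_def)
    then show "D \<in> (\<lambda>E. phi ` E) ` Av4 Z0 X0 B3 B4" using E by force
  next
    fix D assume "D \<in> (\<lambda>E. phi ` E) ` Av4 Z0 X0 B3 B4"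
    then obtain E where E: "D = phi ` E" "E \<in> Av4 Z0 X0 B3 B4" by blast
    then have E': "max_comm_class E" "E \<inter> Z0 = {}" "E \<inter> X0 = {}" "E \<inter> B3 = {}" "E \<inter> B4 = {}"
      by (auto simp: Av4_def)
    have "max_comm_class D" using sympm_class[OF phi(1), of E] E'(1) E(1) by simp
    moreover have "D \<inter> A1 = {}" using dis[of E Z0] E'(2) unfolding E(1) phi(2) by blast
    moreover have "D \<inter> A2 = {}" using dis[of E X0] E'(3) unfolding E(1) phi(3) by blast
    moreover have "D \<inter> A3 = {}" using dis[of E B3] E'(4) unfolding E(1) iB3 by blast
    moreover have "D \<inter> A4 = {}" using dis[of E B4] E'(5) unfolding E(1) iB4 by blast
    ultimately show "D \<in> Av4 A1 A2 A3 A4" by (simp add: Av4_def)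
  qed
  have inj: "inj_on (\<lambda>E. phi ` E) X" for X
    using bphi by (auto intro!: inj_onI simp: bij_def inj_image_eq_iff)
  have "card (Av4 A1 A2 A3 A4) = 6" unfolding Av using card_image[OF inj] Ks by simp
  moreover have "\<forall>D\<in>Av4 A1 A2 A3 A4. \<exists>D'\<in>Av4 A1 A2 A3 A4. D' \<noteq> D \<and> D \<inter> D' \<noteq> {}"
  proof
    fix D assume "D \<in> Av4 A1 A2 A3 A4"
    then obtain E where E: "D = phi ` E" "E \<in> Av4 Z0 X0 B3 B4" unfolding Av by blast
    then obtain E' where E': "E' \<in> Av4 Z0 X0 B3 B4" "E' \<noteq> E" "E \<inter> E' \<noteq> {}" using Ks by blast
    have "phi ` E' \<noteq> phi ` E" using E'(2) inj[of UNIV] by (meson UNIV_I inj_onD)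
    moreover have "phi ` E \<inter> phi ` E' \<noteq> {}" using E'(3) dis[of E E'] by blast
    ultimately show "\<exists>D'\<in>Av4 A1 A2 A3 A4. D' \<noteq> D \<and> D \<inter> D' \<noteq> {}"
      unfolding Av using E E'(1) by blast
  qed
  ultimately show ?thesis by blast
qed


definition adj :: "complex mat \<Rightarrow> complex mat" where
  "adj A = mat (dim_col A) (dim_row A) (\<lambda>(i,j). cnj (A $$ (j,i)))"

lemma adj_carrier[simp]: "A \<in> carrier_mat n m \<Longrightarrow> adj A \<in> carrier_mat m n"
  unfolding adj_def by (metis carrier_matD(1) carrier_matD(2) mat_carrier)

lemma adj_prod: assumes A: "A \<in> carrier_mat n m" and x: "x \<in> carrier_vec m" and y: "y \<in> carrier_vec n"
  shows "(A *\<^sub>v x) \<bullet>c y = x \<bullet>c (adj A *\<^sub>v y)"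
proof -
  have "(A *\<^sub>v x) \<bullet>c y = (\<Sum>i<n. (\<Sum>j<m. A $$ (i,j) * x $ j) * cnj (y $ i))"
    using A x y by (simp add: scalar_prod_def lessThan_atLeast0 row_def)
  also have "\<dots> = (\<Sum>i<n. \<Sum>j<m. A $$ (i,j) * x $ j * cnj (y $ i))"
    by (simp add: sum_distrib_right)
  also have "\<dots> = (\<Sum>j<m. \<Sum>i<n. A $$ (i,j) * x $ j * cnj (y $ i))"
    by (rule sum.swap)
  also have "\<dots> = (\<Sum>j<m. x $ j * cnj (\<Sum>i<n. cnj (A $$ (i,j)) * y $ i))"
    by (simp add: sum_distrib_left cnj_sum mult_ac)
  also have "\<dots> = x \<bullet>c (adj A *\<^sub>v y)"
    using A x y by (simp add: scalar_prod_def lessThan_atLeast0 row_def adj_def)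
  finally show ?thesis .
qed

lemma pe_conj: "cnj (pauli1_entry a i j) = pauli1_entry a j i"
  by (cases a) auto

lemma adj_pauli: "adj (pauli_mat P) = pauli_mat P"
proof -
  obtain a1 a2 a3 where P: "P = (a1,a2,a3)" by (cases P) auto
  show ?thesis
    by (rule eq_matI) (auto simp: adj_def P pauli_mat_index pe_conj)
qed

lemma herm: assumes "u \<in> carrier_vec 8" "w \<in> carrier_vec 8"
  shows "(pauli_mat P *\<^sub>v u) \<bullet>c w = u \<bullet>c (pauli_mat P *\<^sub>v w)"
  using adj_prod[OF pauli_mat_dim(1) assms] adj_pauli by simp

lemma smult_cscalar_left: assumes "u \<in> carrier_vec n" "w \<in> carrier_vec n"
  shows "(k \<cdot>\<^sub>v u) \<bullet>c w = k * (u \<bullet>c w)"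
  using assms by (simp add: scalar_prod_def sum_distrib_left mult_ac)

lemma smult_cscalar_right: assumes "u \<in> carrier_vec n" "w \<in> carrier_vec n"
  shows "u \<bullet>c (k \<cdot>\<^sub>v w) = cnj k * (u \<bullet>c w)"
  using assms by (simp add: scalar_prod_def sum_distrib_left mult_ac)

lemma pauli_mv_carrier[simp]: "u \<in> carrier_vec 8 \<Longrightarrow> pauli_mat P *\<^sub>v u \<in> carrier_vec 8"
  using mult_mat_vec_carrier[OF pauli_mat_dim(1)] by blast

lemma pauli_mv_sq: assumes "u \<in> carrier_vec 8" shows "pauli_mat P *\<^sub>v (pauli_mat P *\<^sub>v u) = u"
proof -
  have "pauli_mat P *\<^sub>v (pauli_mat P *\<^sub>v u) = (pauli_mat P * pauli_mat P) *\<^sub>v u"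
    by (rule assoc_mult_mat_vec[OF pauli_mat_dim(1) pauli_mat_dim(1) assms, symmetric])
  also have "\<dots> = u" unfolding pauli_sq using assms by (rule one_mult_mat_vec)
  finally show ?thesis .
qed

lemma pauli_norm: "u \<in> carrier_vec 8 \<Longrightarrow> (pauli_mat P *\<^sub>v u) \<bullet>c (pauli_mat P *\<^sub>v u) = u \<bullet>c u"
  by (simp add: herm pauli_mv_sq)

lemma nonzero_entry: assumes "u \<in> carrier_vec n" "u \<noteq> 0\<^sub>v n" obtains i where "i < n" "u $ i \<noteq> 0"
proof -
  have "\<exists>i<n. u $ i \<noteq> 0"
  proof (rule ccontr)
    assume "\<not> (\<exists>i<n. u $ i \<noteq> 0)"
    then have "u = 0\<^sub>v n" using assms(1) by (intro eq_vecI) auto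
    then show False using assms(2) by simp
  qed
  then show ?thesis using that by blast
qed

lemma eig_pm1: assumes "u \<in> carrier_vec 8" "u \<noteq> 0\<^sub>v 8" "pauli_mat P *\<^sub>v u = k \<cdot>\<^sub>v u"
  shows "k = 1 \<or> k = -1"
proof -
  have "u = pauli_mat P *\<^sub>v (k \<cdot>\<^sub>v u)" using pauli_mv_sq[OF assms(1), of P] assms(3) by simp
  also have "\<dots> = k \<cdot>\<^sub>v (pauli_mat P *\<^sub>v u)" by (rule mult_mat_vec[OF pauli_mat_dim(1) assms(1)])
  also have "\<dots> = (k * k) \<cdot>\<^sub>v u" using assms(3) by (simp add: smult_smult_assoc)
  finally have eq: "u = (k * k) \<cdot>\<^sub>v u" .
  obtain i where i: "i < 8" "u $ i \<noteq> 0" using nonzero_entry[OF assms(1,2)] by blast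
  have "u $ i = ((k * k) \<cdot>\<^sub>v u) $ i" using arg_cong[OF eq, of "\<lambda>v. v $ i"] .
  then have "u $ i = (k * k) * u $ i" using i assms(1) by simp
  then have "k * k = 1" using i(2) by simp
  then have "(k - 1) * (k + 1) = 0" by (simp add: algebra_simps)
  then show ?thesis by (auto simp: eq_neg_iff_add_eq_0)
qed

lemma smult_mat_mv: assumes "A \<in> carrier_mat n m" "v \<in> carrier_vec m"
  shows "(c \<cdot>\<^sub>m A) *\<^sub>v v = c \<cdot>\<^sub>v (A *\<^sub>v v)"
  using assms by (intro eq_vecI) (auto simp: scalar_prod_def sum_distrib_left mult.assoc)

lemma swap_mv: assumes "u \<in> carrier_vec 8"
  shows "pauli_mat P *\<^sub>v (pauli_mat R *\<^sub>v u) = (if om P R then -1 else 1) \<cdot>\<^sub>v (pauli_mat R *\<^sub>v (pauli_mat P *\<^sub>v u))"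
proof -
  have c: "pauli_mat R * pauli_mat P \<in> carrier_mat 8 8" by (rule mult_carrier_mat[OF pauli_mat_dim(1) pauli_mat_dim(1)])
  have "pauli_mat P *\<^sub>v (pauli_mat R *\<^sub>v u) = (pauli_mat P * pauli_mat R) *\<^sub>v u"
    by (rule assoc_mult_mat_vec[OF pauli_mat_dim(1) pauli_mat_dim(1) assms, symmetric])
  also have "pauli_mat P * pauli_mat R = (if om P R then -1 else 1) \<cdot>\<^sub>m (pauli_mat R * pauli_mat P)"
    using swap_mat[of R P] om_sym[of P R] by (auto simp: smult_smult_mat' one_smult_mat')
  also have "\<dots> *\<^sub>v u = (if om P R then -1 else 1) \<cdot>\<^sub>v ((pauli_mat R * pauli_mat P) *\<^sub>v u)"
    by (rule smult_mat_mv[OF c assms])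
  also have "(pauli_mat R * pauli_mat P) *\<^sub>v u = pauli_mat R *\<^sub>v (pauli_mat P *\<^sub>v u)"
    by (rule assoc_mult_mat_vec[OF pauli_mat_dim(1) pauli_mat_dim(1) assms])
  finally show ?thesis .
qed


definition Uh :: "complex vec list \<Rightarrow> complex mat" where
  "Uh us = mat (length us) (length us) (\<lambda>(i,j). cnj (us ! i $ j))"

lemma Uh_carrier[simp]: "Uh us \<in> carrier_mat (length us) (length us)"
  by (simp add: Uh_def)

locale onl =
  fixes us :: "complex vec list" and n :: nat
  assumes len: "length us = n" and car: "\<And>i. i < n \<Longrightarrow> us ! i \<in> carrier_vec n"
    and orth: "\<And>i j. i < n \<Longrightarrow> j < n \<Longrightarrow> us ! i \<bullet>c us ! j = (if i = j then 1 else 0)"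
begin

lemma dimv[simp]: "k < n \<Longrightarrow> dim_vec (us ! k) = n"
  using car carrier_vecD by blast

lemma dimUh[simp]: "dim_row (Uh us) = n" "dim_col (Uh us) = n"
  using len by (simp_all add: Uh_def)

lemma UhU: "Uh us * adj (Uh us) = 1\<^sub>m n"
proof (rule eq_matI)
  fix i j assume "i < dim_row (1\<^sub>m n :: complex mat)" "j < dim_col (1\<^sub>m n :: complex mat)"
  then have ij: "i < n" "j < n" by auto
  have "(Uh us * adj (Uh us)) $$ (i,j) = (\<Sum>k<n. cnj (us ! i $ k) * us ! j $ k)"
    using ij len by (simp add: Uh_def adj_def scalar_prod_def lessThan_atLeast0 row_def col_def)
  also have "\<dots> = us ! j \<bullet>c us ! i"
    using ij by (simp add: scalar_prod_def lessThan_atLeast0 mult.commute)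
  also have "\<dots> = 1\<^sub>m n $$ (i,j)" using ij orth by simp
  finally show "(Uh us * adj (Uh us)) $$ (i,j) = 1\<^sub>m n $$ (i,j)" .
qed (auto simp: Uh_def adj_def len)

lemma UUh: "adj (Uh us) * Uh us = 1\<^sub>m n"
  using mat_mult_left_right_inverse[OF _ _ UhU] len by (metis Uh_carrier adj_carrier)

lemma Uh_mv: assumes "b \<in> carrier_vec n" "j < n" shows "(Uh us *\<^sub>v b) $ j = cnj (us ! j \<bullet>c b)"
proof -
  have "(Uh us *\<^sub>v b) $ j = (\<Sum>k<n. cnj (us ! j $ k) * b $ k)"
    using assms len by (simp add: Uh_def scalar_prod_def lessThan_atLeast0 row_def)
  also have "\<dots> = cnj (us ! j \<bullet>c b)"
    using assms car by (simp add: scalar_prod_def lessThan_atLeast0 cnj_sum mult.commute)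
  finally show ?thesis .
qed

lemma parseval: assumes b: "b \<in> carrier_vec n"
  shows "(\<Sum>j<n. cnj (us ! j \<bullet>c b) * (us ! j \<bullet>c b)) = b \<bullet>c b"
proof -
  let ?v = "Uh us *\<^sub>v b"
  have v: "?v \<in> carrier_vec n" using b len by (metis Uh_carrier mult_mat_vec_carrier)
  have dv: "dim_vec ?v = n" using len by (simp add: Uh_def)
  have "?v \<bullet>c ?v = (\<Sum>j\<in>{0..<n}. ?v $ j * conjugate ?v $ j)"
    unfolding scalar_prod_def dim_vec_conjugate dv ..
  also have "\<dots> = (\<Sum>j\<in>{0..<n}. cnj (us ! j \<bullet>c b) * (us ! j \<bullet>c b))"
    by (rule sum.cong) (auto simp: Uh_mv[OF b] dv simp del: index_mult_mat_vec)
  finally have "?v \<bullet>c ?v = (\<Sum>j<n. cnj (us ! j \<bullet>c b) * (us ! j \<bullet>c b))"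
    by (simp add: lessThan_atLeast0)
  moreover have "?v \<bullet>c ?v = b \<bullet>c (adj (Uh us) *\<^sub>v ?v)"
    using adj_prod[of "Uh us" n n b ?v] b v len Uh_carrier[of us] by simp
  moreover have "adj (Uh us) *\<^sub>v ?v = b"
  proof -
    have "adj (Uh us) *\<^sub>v ?v = (adj (Uh us) * Uh us) *\<^sub>v b"
      using b len by (metis Uh_carrier adj_carrier assoc_mult_mat_vec)
    then show ?thesis using UUh b by simp
  qed
  ultimately show ?thesis by simp
qed

lemma adj_col: assumes "j < n" shows "col (adj (Uh us)) j = us ! j"
  using assms len by (intro eq_vecI) (auto simp: Uh_def adj_def)

lemma uniform_eig: assumes A: "A \<in> carrier_mat n n" and e: "\<And>j. j < n \<Longrightarrow> A *\<^sub>v us ! j = c \<cdot>\<^sub>v us ! j"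
  shows "A = c \<cdot>\<^sub>m 1\<^sub>m n"
proof -
  have AU: "A * adj (Uh us) = c \<cdot>\<^sub>m adj (Uh us)"
  proof (rule eq_matI)
    fix i j assume "i < dim_row (c \<cdot>\<^sub>m adj (Uh us))" "j < dim_col (c \<cdot>\<^sub>m adj (Uh us))"
    then have ij: "i < n" "j < n" using len by (auto simp: adj_def Uh_def)
    have "(A * adj (Uh us)) $$ (i,j) = (A *\<^sub>v col (adj (Uh us)) j) $ i"
      using A ij len by (simp add: adj_def Uh_def)
    also have "\<dots> = (c \<cdot>\<^sub>v us ! j) $ i" using e ij adj_col by simp
    also have "\<dots> = (c \<cdot>\<^sub>m adj (Uh us)) $$ (i,j)" using ij car len by (simp add: adj_def Uh_def)
    finally show "(A * adj (Uh us)) $$ (i,j) = (c \<cdot>\<^sub>m adj (Uh us)) $$ (i,j)" .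
  qed (use A len in \<open>auto simp: adj_def Uh_def\<close>)
  have "A = A * (adj (Uh us) * Uh us)" using A UUh by simp
  also have "\<dots> = (A * adj (Uh us)) * Uh us" using A len
    by (metis Uh_carrier adj_carrier assoc_mult_mat)
  also have "\<dots> = c \<cdot>\<^sub>m (adj (Uh us) * Uh us)" unfolding AU using len
    by (metis Uh_carrier adj_carrier mult_smult_assoc_mat)
  finally show ?thesis using UUh by simp
qed

end


lemma orth_eig: assumes u: "u \<in> carrier_vec 8" and w: "w \<in> carrier_vec 8"
  and eu: "pauli_mat P *\<^sub>v u = \<alpha> \<cdot>\<^sub>v u" and ew: "pauli_mat P *\<^sub>v w = \<beta> \<cdot>\<^sub>v w"
  and b: "\<beta> = 1 \<or> \<beta> = -1" and ne: "\<alpha> \<noteq> \<beta>"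
  shows "u \<bullet>c w = 0"
proof -
  have "\<alpha> * (u \<bullet>c w) = (\<alpha> \<cdot>\<^sub>v u) \<bullet>c w" using u w by (simp add: smult_cscalar_left)
  also have "\<dots> = (pauli_mat P *\<^sub>v u) \<bullet>c w" using eu by simp
  also have "\<dots> = u \<bullet>c (pauli_mat P *\<^sub>v w)" using herm[OF u w] .
  also have "\<dots> = cnj \<beta> * (u \<bullet>c w)" using ew u w by (simp add: smult_cscalar_right)
  also have "\<dots> = \<beta> * (u \<bullet>c w)" using b by auto
  finally have "(\<alpha> - \<beta>) * (u \<bullet>c w) = 0" by (simp add: algebra_simps)
  then show ?thesis using ne by simp
qed

lemma eigen_pm: assumes "eigenvector (pauli_mat P) v k" shows "v \<in> carrier_vec 8" "v \<noteq> 0\<^sub>v 8"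
  "pauli_mat P *\<^sub>v v = k \<cdot>\<^sub>v v" "k = 1 \<or> k = -1"
proof -
  show v: "v \<in> carrier_vec 8" "v \<noteq> 0\<^sub>v 8" "pauli_mat P *\<^sub>v v = k \<cdot>\<^sub>v v"
    using assms by (auto simp: eigenvector_def)
  show "k = 1 \<or> k = -1" by (rule eig_pm1[OF v])
qed

lemma mv_smult_pauli: "u \<in> carrier_vec 8 \<Longrightarrow> pauli_mat R *\<^sub>v (k \<cdot>\<^sub>v u) = k \<cdot>\<^sub>v (pauli_mat R *\<^sub>v u)"
  by (rule mult_mat_vec[OF pauli_mat_dim(1)])

lemma cmod_cnj_sq: "cnj z * z = complex_of_real ((cmod z)^2)"
  using complex_norm_square[of z] by (simp add: mult.commute)

lemma mub:
  assumes C: "max_comm_class C" and D: "max_comm_class D" and CD: "C \<inter> D = {}"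
    and B1: "common_eigenbasis C B1" and B2: "common_eigenbasis D B2" and a: "a \<in> B1" and b: "b \<in> B2"
  shows "cmod (a \<bullet>c b) = 1 / sqrt 8"
proof -
  have onb1: "onb8 B1" and onb2: "onb8 B2" using B1 B2 by (auto simp: common_eigenbasis_def)
  have ac: "a \<in> carrier_vec 8" "a \<bullet>c a = 1" using onb1 a by (auto simp: onb8_def)
  have bc: "b \<in> carrier_vec 8" "b \<bullet>c b = 1" using onb2 b by (auto simp: onb8_def)
  have eva: "\<And>P. P \<in> C \<Longrightarrow> \<exists>k. eigenvector (pauli_mat P) a k"
    using B1 a by (auto simp: common_eigenbasis_def)
  have evb: "\<And>P. P \<in> D \<Longrightarrow> \<exists>k. eigenvector (pauli_mat P) b k"
    using B2 b by (auto simp: common_eigenbasis_def)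
  define N where "N = insert 0 D"
  have Nsub: "subgrp N" "card N = 8" using class_subgrp[OF D] by (simp_all add: N_def)
  have pC: "perp C = insert 0 C" using mcc_perp(1)[OF C] .
  obtain rs where rs: "set rs = N" "distinct rs" using finite_distinct_list[OF finite[of N]] by blast
  have lrs: "length rs = 8" using distinct_card[OF rs(2)] rs(1) Nsub(2) by simp
  define us where "us = map (\<lambda>R. pauli_mat R *\<^sub>v a) rs"
  have lus: "length us = 8" by (simp add: us_def lrs)
  have usi: "i < 8 \<Longrightarrow> us ! i = pauli_mat (rs ! i) *\<^sub>v a" for i by (simp add: us_def lrs)
  have rsN: "i < 8 \<Longrightarrow> rs ! i \<in> N" for i using nth_mem[of i rs] rs(1) lrs by simp
  interpret onl us 8
  proof
    show "length us = 8" by (rule lus)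
    show "i < 8 \<Longrightarrow> us ! i \<in> carrier_vec 8" for i :: nat using usi ac by simp
    fix i j :: nat assume ij: "i < 8" "j < 8"
    show "us ! i \<bullet>c us ! j = (if i = j then 1 else 0)"
    proof (cases "i = j")
      case True
      then show ?thesis using ij usi pauli_norm ac by simp
    next
      case False
      define R where "R = rs ! i"
      define R' where "R' = rs ! j"
      have RR: "R \<noteq> R'" using False rs(2) lrs ij by (simp add: R_def R'_def nth_eq_iff_index_eq)
      have "R + R' \<in> N" using Nsub(1) rsN ij by (simp add: subgrp_def R_def R'_def)
      moreover have nz: "R + R' \<noteq> 0" using RR by (simp add: add_eq_zero3)
      ultimately have "R + R' \<in> D" by (simp add: N_def)
      then have "R + R' \<notin> perp C" using pC CD nz by auto
      then obtain P where P: "P \<in> C" "om (R + R') P" by (auto simp: perp_def)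
      then have oP: "om P R \<noteq> om P R'" using om_add_right[of P R R'] om_sym[of "R + R'" P] by simp
      obtain k where k: "eigenvector (pauli_mat P) a k" using eva[OF P(1)] by blast
      note ek = eigen_pm[OF k]
      have e1: "pauli_mat P *\<^sub>v us ! i = ((if om P R then -1 else 1) * k) \<cdot>\<^sub>v us ! i"
        using ij ac ek by (simp add: usi R_def swap_mv mv_smult_pauli smult_smult_assoc)
      have e2: "pauli_mat P *\<^sub>v us ! j = ((if om P R' then -1 else 1) * k) \<cdot>\<^sub>v us ! j"
        using ij ac ek by (simp add: usi R'_def swap_mv mv_smult_pauli smult_smult_assoc)
      have "us ! i \<bullet>c us ! j = 0"
        by (rule orth_eig[OF _ _ e1 e2]) (use ij usi ac ek oP in auto)
      then show ?thesis using False by simp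
    qed
  qed
  have x: "cmod (us ! j \<bullet>c b) = cmod (a \<bullet>c b)" if j: "j < 8" for j
  proof -
    have R: "rs ! j \<in> N" using rsN j .
    obtain \<mu> where mu: "pauli_mat (rs ! j) *\<^sub>v b = \<mu> \<cdot>\<^sub>v b" "\<mu> = 1 \<or> \<mu> = -1"
    proof (cases "rs ! j = 0")
      case True
      then show ?thesis using that[of 1] bc by (simp add: pauli_mat_zero)
    next
      case False
      then have "rs ! j \<in> D" using R by (simp add: N_def)
      then obtain k where "eigenvector (pauli_mat (rs ! j)) b k" using evb by blast
      then show ?thesis using that eigen_pm by blast
    qed
    have "us ! j \<bullet>c b = a \<bullet>c (pauli_mat (rs ! j) *\<^sub>v b)" using usi j herm ac bc by simp
    also have "\<dots> = cnj \<mu> * (a \<bullet>c b)" using mu ac bc by (simp add: smult_cscalar_right)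
    finally show ?thesis using mu by (auto simp: norm_mult)
  qed
  have "(\<Sum>j<8. cnj (us ! j \<bullet>c b) * (us ! j \<bullet>c b)) = 1" using parseval[OF bc(1)] bc(2) by simp
  also have "(\<Sum>j<8. cnj (us ! j \<bullet>c b) * (us ! j \<bullet>c b)) = (\<Sum>j<(8::nat). complex_of_real ((cmod (a \<bullet>c b))^2))"
    by (rule sum.cong) (simp_all add: cmod_cnj_sq x)
  also have "(\<Sum>j<(8::nat). complex_of_real ((cmod (a \<bullet>c b))^2)) = complex_of_real (8 * (cmod (a \<bullet>c b))^2)"
    by simp
  finally have "complex_of_real (8 * (cmod (a \<bullet>c b))^2) = 1" .
  then have "8 * (cmod (a \<bullet>c b))^2 = 1" using of_real_eq_1_iff by blast
  then have "(cmod (a \<bullet>c b))^2 = (1 / sqrt 8)^2" by (simp add: power_divide)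
  then show ?thesis by (simp add: power2_eq_iff_nonneg)
qed

lemma pauli_not_scalar: assumes "pauli_mat P = \<beta> \<cdot>\<^sub>m 1\<^sub>m 8" "P \<noteq> 0" shows False
proof -
  obtain R where R: "om R P" using exists_anti[OF assms(2)] by blast
  have sw: "pauli_mat R * pauli_mat P = -1 \<cdot>\<^sub>m (pauli_mat P * pauli_mat R)"
    using swap_mat[where P=P and Q=R] R om_sym[of P R] by simp
  have l: "pauli_mat R * pauli_mat P = \<beta> \<cdot>\<^sub>m pauli_mat R"
    unfolding assms(1) by (simp add: mult_smult_distrib[OF pauli_mat_dim(1) one_carrier_mat])
  have r: "pauli_mat P * pauli_mat R = \<beta> \<cdot>\<^sub>m pauli_mat R"
    unfolding assms(1) by (simp add: mult_smult_assoc_mat[OF one_carrier_mat pauli_mat_dim(1)])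
  have "\<beta> \<cdot>\<^sub>m pauli_mat R = (- \<beta>) \<cdot>\<^sub>m pauli_mat R"
    using sw l r by (simp add: smult_smult_mat')
  then have "(\<beta> \<cdot>\<^sub>m pauli_mat R) * pauli_mat R = ((- \<beta>) \<cdot>\<^sub>m pauli_mat R) * pauli_mat R" by simp
  then have "\<beta> \<cdot>\<^sub>m (1\<^sub>m 8) = (- \<beta>) \<cdot>\<^sub>m (1\<^sub>m 8 :: complex mat)"
    by (simp add: mult_smult_assoc_mat[OF pauli_mat_dim(1) pauli_mat_dim(1)] pauli_sq)
  then have "(\<beta> \<cdot>\<^sub>m (1\<^sub>m 8)) $$ (0,0) = ((- \<beta>) \<cdot>\<^sub>m (1\<^sub>m 8 :: complex mat)) $$ (0,0)" by simp
  then have b0: "\<beta> = 0" by simp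
  have "pauli_mat P * pauli_mat P = (\<beta> \<cdot>\<^sub>m 1\<^sub>m 8) * pauli_mat P" by (subst (1) assms(1)) (rule refl)
  also have "\<dots> = \<beta> \<cdot>\<^sub>m pauli_mat P" by (simp add: mult_smult_assoc_mat[OF one_carrier_mat pauli_mat_dim(1)])
  finally have "pauli_mat P * pauli_mat P = \<beta> \<cdot>\<^sub>m pauli_mat P" .
  then have "1\<^sub>m 8 = (0::complex) \<cdot>\<^sub>m pauli_mat P" using b0 pauli_sq by simp
  then have "(1\<^sub>m 8 :: complex mat) $$ (0,0) = ((0::complex) \<cdot>\<^sub>m pauli_mat P) $$ (0,0)" by simp
  then show False by simp
qed


lemma onb_list: assumes "onb8 B"
  obtains us where "set us = B" "distinct us" "length us = 8" "onl us 8"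
proof -
  have fin: "finite B" using assms by (metis card.infinite onb8_def zero_neq_numeral)
  obtain us where us: "set us = B" "distinct us" using finite_distinct_list[OF fin] by blast
  have l: "length us = 8" using distinct_card[OF us(2)] us(1) assms by (simp add: onb8_def)
  have "onl us 8"
  proof
    show "length us = 8" by (rule l)
    show "i < 8 \<Longrightarrow> us ! i \<in> carrier_vec 8" for i :: nat
      using assms us(1) l nth_mem[of i us] by (auto simp: onb8_def)
    fix i j :: nat assume ij: "i < 8" "j < 8"
    have "us ! i \<in> B" "us ! j \<in> B" using ij us(1) l nth_mem by auto
    moreover have "us ! i = us ! j \<longleftrightarrow> i = j" using us(2) l ij by (simp add: nth_eq_iff_index_eq)
    ultimately show "us ! i \<bullet>c us ! j = (if i = j then 1 else 0)"
      using assms by (auto simp: onb8_def)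
  qed
  then show ?thesis using that us l by blast
qed

lemma weak_aux:
  assumes D: "max_comm_class D" and B: "common_eigenbasis D B" and B': "common_eigenbasis E B'"
    and P: "P \<in> D" "P \<in> E"
  shows "\<exists>a\<in>B. \<exists>b\<in>B'. cmod (a \<bullet>c b) \<noteq> 1 / sqrt 8"
proof -
  have onb: "onb8 B" "onb8 B'" using B B' by (auto simp: common_eigenbasis_def)
  have "B' \<noteq> {}" using onb(2) by (auto simp: onb8_def)
  then obtain b where b: "b \<in> B'" by blast
  obtain \<beta> where "eigenvector (pauli_mat P) b \<beta>" using B' b P(2) by (auto simp: common_eigenbasis_def)
  note eb = eigen_pm[OF this]
  show ?thesis
  proof (cases "\<exists>a\<in>B. pauli_mat P *\<^sub>v a \<noteq> \<beta> \<cdot>\<^sub>v a")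
    case True
    then obtain a where a: "a \<in> B" "pauli_mat P *\<^sub>v a \<noteq> \<beta> \<cdot>\<^sub>v a" by blast
    obtain k where "eigenvector (pauli_mat P) a k" using B a(1) P(1) by (auto simp: common_eigenbasis_def)
    note ea = eigen_pm[OF this]
    have "k \<noteq> \<beta>" using ea(3) a(2) by auto
    then have "a \<bullet>c b = 0" using orth_eig[OF ea(1) eb(1) ea(3) eb(3) eb(4)] by simp
    then show ?thesis using a(1) b by force
  next
    case False
    obtain us where us: "set us = B" "distinct us" "length us = 8" "onl us 8"
      using onb_list[OF onb(1)] by blast
    have "pauli_mat P = \<beta> \<cdot>\<^sub>m 1\<^sub>m 8"
    proof (rule onl.uniform_eig[OF us(4) pauli_mat_dim(1)])
      fix j :: nat assume "j < 8"
      then have "us ! j \<in> B" using us nth_mem by metis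
      then show "pauli_mat P *\<^sub>v us ! j = \<beta> \<cdot>\<^sub>v us ! j" using False by blast
    qed
    moreover have "P \<noteq> 0" using D P(1) mcc_perp(2) by blast
    ultimately show ?thesis using pauli_not_scalar by blast
  qed
qed

lemma five_mub:
  fixes cl :: "nat \<Rightarrow> pauli3 set" and bs :: "nat \<Rightarrow> complex vec set"
  assumes cls: "\<And>k. k < 5 \<Longrightarrow> max_comm_class (cl k)"
    and dj: "\<And>k k'. k < 5 \<Longrightarrow> k' < 5 \<Longrightarrow> k \<noteq> k' \<Longrightarrow> cl k \<inter> cl k' = {}"
    and unext: "\<not> (\<exists>D. max_comm_class D \<and> D \<subseteq> nonid_paulis - (\<Union>k<5. cl k))"
    and ceb: "\<And>k. k < 5 \<Longrightarrow> common_eigenbasis (cl k) (bs k)"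
  shows "card (bs ` {..<5}) = 5 \<and> weakly_unextendible_MUBs (bs ` {..<5})"
proof -
  have mu: "mutually_unbiased (bs k) (bs k')" if "k < 5" "k' < 5" "k \<noteq> k'" for k k'
    unfolding mutually_unbiased_def using mub[OF cls cls dj ceb ceb] that by blast
  have onb: "onb8 (bs k)" if "k < 5" for k using ceb[OF that] by (simp add: common_eigenbasis_def)
  have neq: "bs k \<noteq> bs k'" if "k < 5" "k' < 5" "k \<noteq> k'" for k k'
  proof
    assume eq: "bs k = bs k'"
    have "bs k \<noteq> {}" using onb[OF that(1)] by (auto simp: onb8_def)
    then obtain a where a: "a \<in> bs k" by blast
    have "a \<bullet>c a = 1" using onb[OF that(1)] a by (simp add: onb8_def)
    moreover have "cmod (a \<bullet>c a) = 1 / sqrt 8" using mu[OF that] a eq by (simp add: mutually_unbiased_def)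
    ultimately show False by simp
  qed
  have inj: "inj_on bs {..<5}" by (rule inj_onI) (use neq in blast)
  have card: "card (bs ` {..<5}) = 5" using card_image[OF inj] by simp
  have "weakly_unextendible_MUBs (bs ` {..<5})"
    unfolding weakly_unextendible_MUBs_def
  proof (intro conjI)
    show "\<forall>B\<in>bs ` {..<5}. onb8 B" using onb by blast
    show "\<forall>B1\<in>bs ` {..<5}. \<forall>B2\<in>bs ` {..<5}. B1 \<noteq> B2 \<longrightarrow> mutually_unbiased B1 B2"
      using mu by blast
    show "\<not> (\<exists>D B. max_comm_class D \<and> common_eigenbasis D B \<and> (\<forall>B'\<in>bs ` {..<5}. mutually_unbiased B B'))"
    proof
      assume "\<exists>D B. max_comm_class D \<and> common_eigenbasis D B \<and> (\<forall>B'\<in>bs ` {..<5}. mutually_unbiased B B')"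
      then obtain D B where D: "max_comm_class D" "common_eigenbasis D B"
        and m: "\<forall>B'\<in>bs ` {..<5}. mutually_unbiased B B'" by blast
      have "D \<subseteq> nonid_paulis" using D(1) by (simp add: max_comm_class_def)
      then have "\<not> D \<subseteq> nonid_paulis - (\<Union>k<5. cl k) " using unext D(1) by blast
      then obtain P k where P: "P \<in> D" "k < 5" "P \<in> cl k" using \<open>D \<subseteq> nonid_paulis\<close> by blast
      obtain a b where ab: "a \<in> B" "b \<in> bs k" "cmod (a \<bullet>c b) \<noteq> 1 / sqrt 8"
        using weak_aux[OF D ceb[OF P(2)] P(1) P(3)] by blast
      have "mutually_unbiased B (bs k)" using m P(2) by blast
      then show False using ab by (simp add: mutually_unbiased_def)
    qed
  qed
  then show ?thesis using card by blast
qed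


lemma lt5: "{..<5::nat} = {0,1,2,3,4}" by auto
lemma i15: "{1..5::nat} = {1,2,3,4,5}" by auto
lemma i19: "{1..9::nat} = {1,2,3,4,5,6,7,8,9}" by auto

theorem theorem3:
  fixes C :: "nat \<Rightarrow> pauli3 set"
  assumes classes: "\<forall>i\<in>{1..9}. max_comm_class (C i)"
    and disjoint: "\<forall>i\<in>{1..9}. \<forall>j\<in>{1..9}. i \<noteq> j \<longrightarrow> C i \<inter> C j = {}"
    and complete: "(\<Union>i\<in>{1..9}. C i) = nonid_paulis"
  shows "(\<exists>!S. max_comm_class S \<and> S \<subseteq> (\<Union>i\<in>{1..5}. C i) \<and> (\<forall>i\<in>{1..5}. S \<noteq> C i)) \<and>
    (\<forall>S. max_comm_class S \<and> S \<subseteq> (\<Union>i\<in>{1..5}. C i) \<and> (\<forall>i\<in>{1..5}. S \<noteq> C i) \<longrightarrow>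
           card {C 6, C 7, C 8, C 9, S} = 5 \<and>
           unextendible_classes {C 6, C 7, C 8, C 9, S} \<and>
           (\<forall>B6 B7 B8 B9 BS. common_eigenbasis (C 6) B6 \<and> common_eigenbasis (C 7) B7 \<and>
              common_eigenbasis (C 8) B8 \<and> common_eigenbasis (C 9) B9 \<and>
              common_eigenbasis S BS \<longrightarrow>
              card {B6, B7, B8, B9, BS} = 5 \<and> weakly_unextendible_MUBs {B6, B7, B8, B9, BS}))"
proof -
  have cls: "\<And>i. i \<in> {1..9} \<Longrightarrow> max_comm_class (C i)" using classes by blast
  have dis: "\<And>i j. i \<in> {1..9} \<Longrightarrow> j \<in> {1..9} \<Longrightarrow> i \<noteq> j \<Longrightarrow> C i \<inter> C j = {}" using disjoint by blast
  have nonempty: "S \<noteq> {}" if "max_comm_class S" for S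
    using mcc_perp(4)[OF that] by (metis card.empty zero_neq_numeral)
  have ne: "\<And>i. i \<in> {1..9} \<Longrightarrow> C i \<noteq> {}" using cls nonempty by blast
  have neqC: "\<And>i j. i \<in> {1..9} \<Longrightarrow> j \<in> {1..9} \<Longrightarrow> i \<noteq> j \<Longrightarrow> C i \<noteq> C j"
    using dis ne by (metis Int_absorb)
  define Av where "Av = Av4 (C 6) (C 7) (C 8) (C 9)"
  have KA: "card Av = 6 \<and> (\<forall>D\<in>Av. \<exists>D'\<in>Av. D' \<noteq> D \<and> D \<inter> D' \<noteq> {})"
    unfolding Av_def by (rule K) (simp_all add: cls dis)
  define U where "U = (\<Union>i\<in>{1..5}. C i)"
  have charS: "S \<subseteq> U \<longleftrightarrow> S \<in> Av" if S: "max_comm_class S" for S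
  proof
    assume SU: "S \<subseteq> U"
    have "S \<inter> C j = {}" if j: "j \<in> {6..9}" for j
    proof (rule equals0I)
      fix x assume x: "x \<in> S \<inter> C j"
      then obtain i where i: "i \<in> {1..5}" "x \<in> C i" using SU by (auto simp: U_def)
      have "C i \<inter> C j = {}" using i(1) j by (intro dis) auto
      then show False using i x by blast
    qed
    then show "S \<in> Av" using S by (simp add: Av_def Av4_def)
  next
    assume "S \<in> Av"
    then have d: "S \<inter> C 6 = {}" "S \<inter> C 7 = {}" "S \<inter> C 8 = {}" "S \<inter> C 9 = {}"
      by (simp_all add: Av_def Av4_def)
    show "S \<subseteq> U"
    proof
      fix x assume x: "x \<in> S"
      then have "x \<in> nonid_paulis" using S by (auto simp: max_comm_class_def)
      then obtain i where i: "i \<in> {1..9}" "x \<in> C i" using complete by blast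
      have "i \<notin> {6,7,8,9}" using d x i(2) by auto
      then have "i \<in> {1..5}" using i(1) by auto
      then show "x \<in> U" using i(2) by (auto simp: U_def)
    qed
  qed
  define F5 where "F5 = {C 1, C 2, C 3, C 4, C 5}"
  have F5Av: "F5 \<subseteq> Av"
  proof -
    have "C i \<in> Av" if "i \<in> {1..5}" for i
    proof -
      have "max_comm_class (C i)" using cls that by auto
      moreover have "C i \<subseteq> U" using that by (auto simp: U_def)
      ultimately show ?thesis using charS by blast
    qed
    then show ?thesis by (simp add: F5_def)
  qed
  have cF5: "card F5 = 5" unfolding F5_def by (simp add: neqC)
  have "card (Av - F5) = 1" using card_Diff_subset[OF finite[of F5] F5Av] KA cF5 by simp
  then obtain S0 where S0: "Av - F5 = {S0}" using card_1_singletonE by blast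
  have hyp_iff: "(max_comm_class S \<and> S \<subseteq> U \<and> (\<forall>i\<in>{1..5}. S \<noteq> C i)) \<longleftrightarrow> S \<in> Av - F5" for S
  proof
    assume h: "max_comm_class S \<and> S \<subseteq> U \<and> (\<forall>i\<in>{1..5}. S \<noteq> C i)"
    then have "S \<in> Av" using charS by blast
    moreover have "S \<notin> F5" using h by (simp add: F5_def i15)
    ultimately show "S \<in> Av - F5" by blast
  next
    assume h: "S \<in> Av - F5"
    then have "max_comm_class S" by (simp add: Av_def Av4_def)
    moreover have "S \<subseteq> U" using charS h calculation by blast
    moreover have "\<forall>i\<in>{1..5}. S \<noteq> C i" using h unfolding F5_def i15 by blast
    ultimately show "max_comm_class S \<and> S \<subseteq> U \<and> (\<forall>i\<in>{1..5}. S \<noteq> C i)" by blast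
  qed
  have part1: "\<exists>!S. max_comm_class S \<and> S \<subseteq> U \<and> (\<forall>i\<in>{1..5}. S \<noteq> C i)"
    unfolding hyp_iff S0 by blast
  have part2: "card {C 6, C 7, C 8, C 9, S} = 5 \<and>
           unextendible_classes {C 6, C 7, C 8, C 9, S} \<and>
           (\<forall>B6 B7 B8 B9 BS. common_eigenbasis (C 6) B6 \<and> common_eigenbasis (C 7) B7 \<and>
              common_eigenbasis (C 8) B8 \<and> common_eigenbasis (C 9) B9 \<and>
              common_eigenbasis S BS \<longrightarrow>
              card {B6, B7, B8, B9, BS} = 5 \<and> weakly_unextendible_MUBs {B6, B7, B8, B9, BS})"
    if hS: "max_comm_class S \<and> S \<subseteq> U \<and> (\<forall>i\<in>{1..5}. S \<noteq> C i)" for S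
  proof -
    have SAF: "S \<in> Av - F5" using hS hyp_iff by blast
    then have SS0: "S = S0" using S0 by blast
    have Sc: "max_comm_class S" using hS by blast
    have Sd: "S \<inter> C 6 = {}" "S \<inter> C 7 = {}" "S \<inter> C 8 = {}" "S \<inter> C 9 = {}"
      using SAF by (simp_all add: Av_def Av4_def)
    have Sne: "S \<noteq> {}" using nonempty Sc by blast
    have SneC: "S \<noteq> C 6" "S \<noteq> C 7" "S \<noteq> C 8" "S \<noteq> C 9" using Sd Sne by auto
    have AvF: "Av = insert S F5" using S0 SS0 F5Av by blast
    have unext0: "\<not> (\<exists>D. max_comm_class D \<and> D \<subseteq> nonid_paulis - (C 6 \<union> C 7 \<union> C 8 \<union> C 9 \<union> S))"
    proof
      assume "\<exists>D. max_comm_class D \<and> D \<subseteq> nonid_paulis - (C 6 \<union> C 7 \<union> C 8 \<union> C 9 \<union> S)"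
      then obtain D where D: "max_comm_class D" "D \<subseteq> nonid_paulis - (C 6 \<union> C 7 \<union> C 8 \<union> C 9 \<union> S)" by blast
      then have "D \<in> Av" by (auto simp: Av_def Av4_def)
      moreover have DS: "D \<inter> S = {}" using D by blast
      moreover have "D \<noteq> S" using DS Sne by blast
      ultimately have "D \<in> F5" using AvF by blast
      then obtain i where i: "i \<in> {1..5}" "D = C i" unfolding F5_def i15 by blast
      obtain D' where D': "D' \<in> Av" "D' \<noteq> D" "D \<inter> D' \<noteq> {}" using KA \<open>D \<in> Av\<close> by blast
      show False
      proof (cases "D' = S")
        case True
        then show ?thesis using D' DS by blast
      next
        case False
        then have "D' \<in> F5" using D' AvF by blast
        then obtain i' where i': "i' \<in> {1..5}" "D' = C i'" unfolding F5_def i15 by blast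
        have "i \<noteq> i'" using i i' D'(2) by blast
        then have "C i \<inter> C i' = {}" using i i' by (intro dis) auto
        then show False using D'(3) i i' by blast
      qed
    qed
    define cl where "cl k = [C 6, C 7, C 8, C 9, S] ! k" for k
    have clv: "cl 0 = C 6" "cl 1 = C 7" "cl (Suc 0) = C 7" "cl 2 = C 8" "cl 3 = C 9" "cl 4 = S"
      by (simp_all add: cl_def)
    have cl_cls: "max_comm_class (cl k)" if "k < 5" for k
    proof -
      have "k \<in> {0,1,2,3,4}" using that by auto
      moreover have "max_comm_class (C 6)" "max_comm_class (C 7)" "max_comm_class (C 8)" "max_comm_class (C 9)"
        using cls by simp_all
      ultimately show ?thesis using Sc by (auto simp: clv)
    qed
    have disC: "C i \<inter> C j = {}" if "i \<in> {6,7,8,9}" "j \<in> {6,7,8,9}" "i \<noteq> j" for i j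
      using that by (intro dis) auto
    have cl_dj: "cl k \<inter> cl k' = {}" if "k < 5" "k' < 5" "k \<noteq> k'" for k k'
    proof -
      have "k \<in> {0,1,2,3,4}" "k' \<in> {0,1,2,3,4}" using that by auto
      moreover have cc: "C 6 \<inter> C 7 = {}" "C 6 \<inter> C 8 = {}" "C 6 \<inter> C 9 = {}" "C 7 \<inter> C 6 = {}" "C 7 \<inter> C 8 = {}" "C 7 \<inter> C 9 = {}" "C 8 \<inter> C 6 = {}" "C 8 \<inter> C 7 = {}" "C 8 \<inter> C 9 = {}" "C 9 \<inter> C 6 = {}" "C 9 \<inter> C 7 = {}" "C 9 \<inter> C 8 = {}"
        using dis by simp_all
      moreover have "C 6 \<inter> S = {}" "C 7 \<inter> S = {}" "C 8 \<inter> S = {}" "C 9 \<inter> S = {}"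
        using Sd by (simp_all add: Int_commute)
      ultimately show ?thesis using that Sd by (auto simp: clv simp del: Int_empty_left Int_empty_right)
    qed
    have Ucl: "(\<Union>k<5. cl k) = C 6 \<union> C 7 \<union> C 8 \<union> C 9 \<union> S"
      by (auto simp: lt5 clv)
    have unext: "\<not> (\<exists>D. max_comm_class D \<and> D \<subseteq> nonid_paulis - (\<Union>k<5. cl k))"
      using unext0 unfolding Ucl .
    have card5: "card {C 6, C 7, C 8, C 9, S} = 5"
      using SneC by (simp add: neqC)
    have unextF: "unextendible_classes {C 6, C 7, C 8, C 9, S}"
      unfolding unextendible_classes_def
    proof (intro conjI)
      show "\<forall>X\<in>{C 6, C 7, C 8, C 9, S}. max_comm_class X" using Sc cls by simp
      show "\<forall>X\<in>{C 6, C 7, C 8, C 9, S}. \<forall>Y\<in>{C 6, C 7, C 8, C 9, S}. X \<noteq> Y \<longrightarrow> X \<inter> Y = {}"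
        using Sd disC by (auto simp: Int_commute)
      show "\<not> (\<exists>D. max_comm_class D \<and> D \<subseteq> nonid_paulis - \<Union> {C 6, C 7, C 8, C 9, S})"
        using unext0 by (simp add: Un_assoc)
    qed
    have mubs: "card {B6, B7, B8, B9, BS} = 5 \<and> weakly_unextendible_MUBs {B6, B7, B8, B9, BS}"
      if ce: "common_eigenbasis (C 6) B6" "common_eigenbasis (C 7) B7"
          "common_eigenbasis (C 8) B8" "common_eigenbasis (C 9) B9" "common_eigenbasis S BS"
      for B6 B7 B8 B9 BS
    proof -
      define bs where "bs k = [B6, B7, B8, B9, BS] ! k" for k
      have bsv: "bs 0 = B6" "bs 1 = B7" "bs (Suc 0) = B7" "bs 2 = B8" "bs 3 = B9" "bs 4 = BS"
        by (simp_all add: bs_def)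
      have ceb: "common_eigenbasis (cl k) (bs k)" if "k < 5" for k
      proof -
        have "k \<in> {0,1,2,3,4}" using that by auto
        then show ?thesis using ce by (auto simp: clv bsv)
      qed
      have im: "bs ` {..<5} = {B6, B7, B8, B9, BS}" by (simp add: lt5 bsv)
      show ?thesis using five_mub[OF cl_cls cl_dj unext ceb] unfolding im by blast
    qed
    show ?thesis using card5 unextF mubs by blast
  qed
  show ?thesis using part1 part2 unfolding U_def by blast
qed


end
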